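(* The functions \[ \Phi(x)=x\,\frac{\mathrm{Ai}'(a_1+x)}{\mathrm{Ai}(a_1+x)}\qquad\text{and}\qquad \Psi(x)=\frac{\mathrm{Ai}'(a_1+x)}{\mathrm{Ai}(a_1+x)} \] are infinitely differentiable and monotonically decreasing on $x>0$, and $\Phi(0)=1$ (i.e. $\lim_{x\to0^+}\Phi(x)=1$).
   Context: $\mathrm{Ai}$ is the Airy function, the solution of $\mathrm{Ai}''(x)=x\,\mathrm{Ai}(x)$ with $\mathrm{Ai}(x)\to0$ as $x\to+\infty$; its zeros are all real and negative, and $a_1\approx-2.338$ is its largest zero. *)

theory Defs
  imports "HOL-Analysis.Analysis"
begin

text \<open>The Airy function Ai, via its standard Maclaurin expansion (DLMF 9.4.1-9.4.3):
  Ai(x) = Ai(0) f(x) + Ai'(0) g(x), where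
  f(x) = sum_k 3^k (1/3)_k x^(3k) / (3k)!,  g(x) = sum_k 3^k (2/3)_k x^(3k+1) / (3k+1)!,
  Ai(0) = 1 / (3^(2/3) Gamma(2/3)),  Ai'(0) = -1 / (3^(1/3) Gamma(1/3)).
  This is the unique solution of y'' = x y decaying at +infinity with the standard normalisation.\<close>

definition airy_f :: "real \<Rightarrow> real" where
  "airy_f x = (\<Sum>k. 3 ^ k * pochhammer (1/3) k * x ^ (3*k) / fact (3*k))"

definition airy_g :: "real \<Rightarrow> real" where
  "airy_g x = (\<Sum>k. 3 ^ k * pochhammer (2/3) k * x ^ (3*k+1) / fact (3*k+1))"

definition Airy_Ai :: "real \<Rightarrow> real" where
  "Airy_Ai x = airy_f x / (3 powr (2/3) * Gamma (2/3))
             - airy_g x / (3 powr (1/3) * Gamma (1/3))"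

text \<open>The largest zero a_1 of Ai (all zeros are real and negative; a_1 is about -2.338).\<close>
definition airy_a1 :: real where
  "airy_a1 = (GREATEST x. Airy_Ai x = 0)"

end

theory Submission
  imports Defs "HOL-Complex_Analysis.Complex_Analysis"
begin

definition alpha :: "nat \<Rightarrow> real" where
  "alpha k = 3 ^ k * pochhammer (1/3) k / fact (3*k)"
definition beta :: "nat \<Rightarrow> real" where
  "beta k = 3 ^ k * pochhammer (2/3) k / fact (3*k+1)"

lemma cancel_helper: "(c::real) \<noteq> 0 \<Longrightarrow> (a*c)/(b*c*d) = a/b/d"
  by (simp add: field_simps)

lemma alpha_Suc: "alpha (Suc k) = alpha k / ((3*k+2)*(3*k+3))"
proof -
  define A where "A = 3^k * pochhammer (1/3::real) k"
  define F where "F = (fact (3*k) :: real)"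
  have e3: "3*Suc k = Suc (Suc (Suc (3*k)))" by simp
  have f: "fact (3*Suc k) = F * (3*k+1)*((3*k+2)*(3*k+3))"
    unfolding e3 fact_Suc F_def by (simp add: algebra_simps)
  have p: "3 ^ Suc k * pochhammer (1/3) (Suc k) = A * (3*k+1)"
    by (simp add: pochhammer_Suc A_def algebra_simps)
  have "alpha (Suc k) = (A * (3*k+1)) / (F * (3*k+1)*((3*k+2)*(3*k+3)))"
    unfolding alpha_def f p by simp
  also have "\<dots> = A / F / ((3*k+2)*(3*k+3))"
    by (rule cancel_helper) simp
  finally show ?thesis unfolding alpha_def A_def F_def by simp
qed

lemma beta_Suc: "beta (Suc k) = beta k / ((3*k+3)*(3*k+4))"
proof -
  define A where "A = 3^k * pochhammer (2/3::real) k"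
  define F where "F = (fact (3*k+1) :: real)"
  have e3: "3*Suc k+1 = Suc (Suc (Suc (3*k+1)))" by simp
  have f: "fact (3*Suc k+1) = F * (3*k+2)*((3*k+3)*(3*k+4))"
    unfolding e3 fact_Suc F_def by (simp add: algebra_simps)
  have p: "3 ^ Suc k * pochhammer (2/3) (Suc k) = A * (3*k+2)"
    by (simp add: pochhammer_Suc A_def algebra_simps)
  have "beta (Suc k) = (A * (3*k+2)) / (F * (3*k+2)*((3*k+3)*(3*k+4)))"
    unfolding beta_def f p by simp
  also have "\<dots> = A / F / ((3*k+3)*(3*k+4))"
    by (rule cancel_helper) simp
  finally show ?thesis unfolding beta_def A_def F_def by simp
qed

lemma alpha_bound: "0 \<le> alpha k \<and> alpha k \<le> 1 / fact k"
proof (induction k)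
  case 0 then show ?case by (simp add: alpha_def)
next
  case (Suc k)
  have "alpha (Suc k) = alpha k / ((3*k+2)*(3*k+3))" by (rule alpha_Suc)
  moreover have "alpha k / ((3*k+2)*(3*k+3)) \<le> (1 / fact k) / (k+1)"
    using Suc by (intro frac_le) (auto simp: field_simps)
  moreover have "(1 / fact k) / (k+1) = (1 / fact (Suc k) :: real)"
    by (simp add: field_simps)
  ultimately show ?case using Suc
    by (smt (verit, ccfv_SIG) divide_nonneg_nonneg of_nat_0_le_iff)
qed

lemma beta_bound: "0 \<le> beta k \<and> beta k \<le> 1 / fact k"
proof (induction k)
  case 0 then show ?case by (simp add: beta_def)
next
  case (Suc k)
  have "beta (Suc k) = beta k / ((3*k+3)*(3*k+4))" by (rule beta_Suc)
  moreover have "beta k / ((3*k+3)*(3*k+4)) \<le> (1 / fact k) / (k+1)"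
    using Suc by (intro frac_le) (auto simp: field_simps)
  moreover have "(1 / fact k) / (k+1) = (1 / fact (Suc k) :: real)"
    by (simp add: field_simps)
  ultimately show ?case using Suc
    by (smt (verit, ccfv_SIG) divide_nonneg_nonneg of_nat_0_le_iff)
qed

definition cf :: "nat \<Rightarrow> real" where
  "cf n = (if n mod 3 = 0 then alpha (n div 3) else 0)"
definition cg :: "nat \<Rightarrow> real" where
  "cg n = (if n mod 3 = 1 then beta (n div 3) else 0)"

lemma summable_exp_like: "summable (\<lambda>k. (1 / fact k) * (r::real) ^ k)"
  using summable_exp[of r] by (simp add: divide_simps)

lemma summable_alpha: "summable (\<lambda>k. alpha k * r ^ k)" if "r \<ge> 0" for r :: real
proof (rule summable_comparison_test[OF _ summable_exp_like[of r]])
  show "\<exists>N. \<forall>n\<ge>N. norm (alpha n * r ^ n) \<le> 1 / fact n * r ^ n"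
  proof (intro exI allI impI)
    fix n :: nat
    have "alpha n * r ^ n \<le> (1 / fact n) * r ^ n"
      using alpha_bound[of n] that by (intro mult_right_mono) auto
    then show "norm (alpha n * r ^ n) \<le> 1 / fact n * r ^ n"
      using alpha_bound[of n] that by simp
  qed
qed

lemma summable_beta: "summable (\<lambda>k. beta k * r ^ k)" if "r \<ge> 0" for r :: real
proof (rule summable_comparison_test[OF _ summable_exp_like[of r]])
  show "\<exists>N. \<forall>n\<ge>N. norm (beta n * r ^ n) \<le> 1 / fact n * r ^ n"
  proof (intro exI allI impI)
    fix n :: nat
    have "beta n * r ^ n \<le> (1 / fact n) * r ^ n"
      using beta_bound[of n] that by (intro mult_right_mono) auto
    then show "norm (beta n * r ^ n) \<le> 1 / fact n * r ^ n"
      using beta_bound[of n] that by simp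
  qed
qed

lemma cf_nonneg: "cf n \<ge> 0" using alpha_bound by (simp add: cf_def)
lemma cg_nonneg: "cg n \<ge> 0" using beta_bound by (simp add: cg_def)

lemma smono3: "strict_mono (\<lambda>k::nat. 3*k)" by (auto simp: strict_mono_def)
lemma smono31: "strict_mono (\<lambda>k::nat. 3*k+1)" by (auto simp: strict_mono_def)

lemma range3: "n \<notin> range (\<lambda>k::nat. 3*k) \<Longrightarrow> n mod 3 \<noteq> 0"
proof
  assume "n \<notin> range (\<lambda>k::nat. 3*k)" "n mod 3 = 0"
  moreover have "n = 3 * (n div 3) + n mod 3" by simp
  ultimately show False by (metis add_0_right rangeI)
qed
lemma range31: "n \<notin> range (\<lambda>k::nat. 3*k+1) \<Longrightarrow> n mod 3 \<noteq> 1"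
proof
  assume "n \<notin> range (\<lambda>k::nat. 3*k+1)" "n mod 3 = 1"
  moreover have "n = 3 * (n div 3) + n mod 3" by simp
  ultimately show False by (metis rangeI)
qed

lemma cf_3k [simp]: "cf (3*k) = alpha k" by (simp add: cf_def)
lemma suc3: "Suc (3*k) div 3 = k" "Suc (3*k) mod 3 = 1" by presburger+
lemma cg_3k1 [simp]: "cg (3*k+1) = beta k" "cg (Suc (3*k)) = beta k" by (simp_all add: cg_def suc3)

lemma summable_cf: "summable (\<lambda>n. cf n * r ^ n)" if "r \<ge> 0" for r :: real
proof -
  have "summable (\<lambda>k. cf (3*k) * r ^ (3*k))"
    using summable_alpha[of "r^3"] that by (simp add: power_mult)
  then show ?thesis
    by (subst (asm) summable_mono_reindex[OF smono3, where f = "\<lambda>n. cf n * r ^ n"])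
       (drule range3, simp add: cf_def)
qed

lemma summable_cg: "summable (\<lambda>n. cg n * r ^ n)" if "r \<ge> 0" for r :: real
proof -
  have s: "summable (\<lambda>k. r * (beta k * (r^3) ^ k))"
    using summable_beta[of "r^3"] that by (intro summable_mult) simp
  have eq: "(\<lambda>k. r * (beta k * (r^3) ^ k)) = (\<lambda>k. cg (3*k+1) * r ^ (3*k+1))"
  proof (rule ext)
    fix k
    have e: "r ^ (3*k+1) = r * (r^3)^k" by (simp add: power_add power_mult)
    show "r * (beta k * (r^3) ^ k) = cg (3*k+1) * r ^ (3*k+1)"
      unfolding cg_3k1(1) e by (simp only: ac_simps)
  qed
  have "summable (\<lambda>k. cg (3*k+1) * r ^ (3*k+1))"
    using s unfolding eq .
  then show ?thesis
    by (subst (asm) summable_mono_reindex[OF smono31, where f = "\<lambda>n. cg n * r ^ n"])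
       (drule range31, simp add: cg_def)
qed

lemma airy_f_eq: "airy_f x = (\<Sum>n. cf n * x ^ n)"
proof -
  have "airy_f x = (\<Sum>k. cf (3*k) * x ^ (3*k))"
    unfolding airy_f_def cf_3k alpha_def by simp
  also have "\<dots> = (\<Sum>n. cf n * x ^ n)"
    by (rule suminf_mono_reindex[OF smono3, where f = "\<lambda>n. cf n * x ^ n"])
       (drule range3, simp add: cf_def)
  finally show ?thesis .
qed

lemma airy_g_eq: "airy_g x = (\<Sum>n. cg n * x ^ n)"
proof -
  have "airy_g x = (\<Sum>k. cg (3*k+1) * x ^ (3*k+1))"
    unfolding airy_g_def cg_3k1 beta_def by simp
  also have "\<dots> = (\<Sum>n. cg n * x ^ n)"
    by (rule suminf_mono_reindex[OF smono31, where f = "\<lambda>n. cg n * x ^ n"])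
       (drule range31, simp add: cg_def)
  finally show ?thesis .
qed

definition C1 :: real where "C1 = 1 / (3 powr (2/3) * Gamma (2/3))"
definition C2 :: real where "C2 = 1 / (3 powr (1/3) * Gamma (1/3))"

lemma C1_pos: "C1 > 0" by (simp add: C1_def)
lemma C2_pos: "C2 > 0" by (simp add: C2_def)

definition ca :: "nat \<Rightarrow> real" where "ca n = C1 * cf n - C2 * cg n"

lemma summable_abs_ca: "summable (\<lambda>n. \<bar>ca n\<bar> * r ^ n)" if "r \<ge> 0" for r :: real
proof (rule summable_comparison_test[OF _ summable_add[OF summable_mult[OF summable_cf[OF that], of C1] summable_mult[OF summable_cg[OF that], of C2]]])
  show "\<exists>N. \<forall>n\<ge>N. norm (\<bar>ca n\<bar> * r ^ n) \<le> C1 * (cf n * r ^ n) + C2 * (cg n * r ^ n)"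
  proof (intro exI allI impI)
    fix n
    have "\<bar>ca n\<bar> \<le> C1 * cf n + C2 * cg n"
      unfolding ca_def using C1_pos C2_pos cf_nonneg[of n] cg_nonneg[of n] by (simp add: abs_le_iff)
    then have "\<bar>ca n\<bar> * r ^ n \<le> (C1 * cf n + C2 * cg n) * r ^ n"
      using that by (intro mult_right_mono) auto
    then show "norm (\<bar>ca n\<bar> * r ^ n) \<le> C1 * (cf n * r ^ n) + C2 * (cg n * r ^ n)"
      using that by (simp add: algebra_simps)
  qed
qed

lemma Airy_Ai_eq: "Airy_Ai x = (\<Sum>n. ca n * x ^ n)"
proof -
  have s1: "summable (\<lambda>n. cf n * x ^ n)" 
    by (rule summable_norm_cancel, rule summable_comparison_test[OF _ summable_cf[of "\<bar>x\<bar>"]])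
       (auto simp: abs_mult power_abs cf_nonneg)
  have s2: "summable (\<lambda>n. cg n * x ^ n)" 
    by (rule summable_norm_cancel, rule summable_comparison_test[OF _ summable_cg[of "\<bar>x\<bar>"]])
       (auto simp: abs_mult power_abs cg_nonneg)
  have "Airy_Ai x = C1 * airy_f x - C2 * airy_g x"
    unfolding Airy_Ai_def C1_def C2_def by simp
  also have "\<dots> = (\<Sum>n. C1 * (cf n * x ^ n) - C2 * (cg n * x ^ n))"
    unfolding airy_f_eq airy_g_eq
    using suminf_diff[OF summable_mult[OF s1, of C1] summable_mult[OF s2, of C2]]
      suminf_mult[OF s1, of C1] suminf_mult[OF s2, of C2] by simp
  also have "\<dots> = (\<Sum>n. ca n * x ^ n)" by (simp add: ca_def algebra_simps)
  finally show ?thesis .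
qed

definition AiS :: "'a::{real_normed_field,banach} \<Rightarrow> 'a" where
  "AiS z = (\<Sum>n. of_real (ca n) * z ^ n)"
definition AiSp :: "'a::{real_normed_field,banach} \<Rightarrow> 'a" where
  "AiSp z = (\<Sum>n. of_real (diffs ca n) * z ^ n)"

lemma summable_ca_gen: "summable (\<lambda>n. of_real (ca n) * (z::'a::{real_normed_field,banach}) ^ n)"
proof (rule summable_norm_cancel, rule summable_comparison_test[OF _ summable_abs_ca[of "norm z"]])
  show "\<exists>N. \<forall>n\<ge>N. norm (norm (of_real (ca n) * z ^ n)) \<le> \<bar>ca n\<bar> * norm z ^ n"
    by (simp add: norm_mult norm_power)
qed simp

lemma summable_dca_gen: "summable (\<lambda>n. of_real (diffs ca n) * (z::'a::{real_normed_field,banach}) ^ n)"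
  using termdiff_converges_all[of "\<lambda>n. of_real (ca n)", OF summable_ca_gen, of z]
  by (simp add: diffs_of_real)

lemma AiS_deriv: "(AiS has_field_derivative AiSp z) (at (z::'a::{real_normed_field,banach}))"
  unfolding AiS_def AiSp_def
  using termdiffs_strong_converges_everywhere[of "\<lambda>n. of_real (ca n)", OF summable_ca_gen, of z]
  by (simp add: diffs_of_real)

lemma cf_rec: "real ((m+2)*(m+3)) * cf (m+3) = cf m"
proof -
  have md: "(m+3) mod 3 = m mod 3" "(m+3) div 3 = Suc (m div 3)" by presburger+
  show ?thesis
  proof (cases "m mod 3 = 0")
    case True
    then obtain j where m: "m = 3*j" by blast
    have "(m+3) div 3 = Suc j" "m div 3 = j" using m by presburger+
    then have c: "cf (m+3) = alpha j / real ((3*j+2)*(3*j+3))" "cf m = alpha j"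
      using True md m by (simp_all add: cf_def alpha_Suc)
    have r: "real ((m+2)*(m+3)) = real ((3*j+2)*(3*j+3))" using m by simp
    have d: "real ((3*j+2)*(3*j+3)) \<noteq> 0" by (simp only: of_nat_eq_0_iff) simp
    show ?thesis unfolding c r using d by simp
  next
    case False then show ?thesis using md by (simp add: cf_def)
  qed
qed

lemma cg_rec: "real ((m+2)*(m+3)) * cg (m+3) = cg m"
proof -
  have md: "(m+3) mod 3 = m mod 3" "(m+3) div 3 = Suc (m div 3)" by presburger+
  show ?thesis
  proof (cases "m mod 3 = 1")
    case True
    then obtain j where m: "m = 3*j+1" by (metis mult_div_mod_eq add.commute)
    have "(m+3) div 3 = Suc j" "m div 3 = j" using m by presburger+
    then have c: "cg (m+3) = beta j / real ((3*j+3)*(3*j+4))" "cg m = beta j"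
      using True md m by (simp_all add: cg_def beta_Suc)
    have r: "real ((m+2)*(m+3)) = real ((3*j+3)*(3*j+4))" using m by (simp add: algebra_simps)
    have d: "real ((3*j+3)*(3*j+4)) \<noteq> 0" by (simp only: of_nat_eq_0_iff) simp
    show ?thesis unfolding c r using d by simp
  next
    case False then show ?thesis using md by (simp add: cg_def)
  qed
qed

lemma ca_rec: "real ((m+2)*(m+3)) * ca (m+3) = ca m"
proof -
  have "real ((m+2)*(m+3)) * ca (m+3) = C1 * (real ((m+2)*(m+3)) * cf (m+3)) - C2 * (real ((m+2)*(m+3)) * cg (m+3))"
    by (simp only: ca_def right_diff_distrib mult.left_commute)
  also have "\<dots> = C1 * cf m - C2 * cg m" by (simp only: cf_rec cg_rec)
  finally show ?thesis by (simp add: ca_def)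
qed

lemma ca_2: "ca (Suc (Suc 0)) = 0" by (simp add: ca_def cf_def cg_def)

lemma diffs2_ca: "diffs (diffs ca) n = (if n = 0 then 0 else ca (n - 1))"
proof (cases n)
  case 0 then show ?thesis by (simp add: diffs_def ca_2)
next
  case (Suc m)
  have "diffs (diffs ca) n = real ((m+2)*(m+3)) * ca (m+3)"
    using Suc by (simp add: diffs_def algebra_simps numeral_3_eq_3 numeral_2_eq_2)
  then show ?thesis using ca_rec[of m] Suc by simp
qed

lemma AiSp_deriv: "(AiSp has_field_derivative z * AiS z) (at (z::'a::{real_normed_field,banach}))"
proof -
  have "(AiSp has_field_derivative (\<Sum>n. of_real (diffs (diffs ca) n) * z ^ n)) (at z)"
    unfolding AiSp_def
    using termdiffs_strong_converges_everywhere[of "\<lambda>n. of_real (diffs ca n)", OF summable_dca_gen, of z]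
    by (simp add: diffs_of_real)
  moreover have "(\<Sum>n. of_real (diffs (diffs ca) n) * z ^ n) = z * AiS z"
  proof -
    define f where "f = (\<lambda>n. of_real (diffs (diffs ca) n) * z ^ n)"
    have "(\<lambda>n. f (Suc n)) = (\<lambda>n. z * (of_real (ca n) * z ^ n))"
      by (auto simp: f_def diffs2_ca)
    moreover have "(\<lambda>n. z * (of_real (ca n) * z ^ n)) sums (z * AiS z)"
      unfolding AiS_def by (intro sums_mult summable_sums summable_ca_gen)
    ultimately have "(\<lambda>n. f (Suc n)) sums (z * AiS z)" by simp
    then have "f sums (z * AiS z + f 0)" by (subst (asm) sums_Suc_iff)
    moreover have "f 0 = 0" by (simp add: f_def diffs2_ca)
    ultimately have "f sums (z * AiS z)" by simp
    then have "suminf f = z * AiS z" by (rule sums_unique[symmetric])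
    then show ?thesis unfolding f_def .
  qed
  ultimately show ?thesis by simp
qed

lemma Airy_Ai_AiS: "Airy_Ai = AiS"
  by (rule ext) (simp add: Airy_Ai_eq AiS_def)

definition Aip :: "real \<Rightarrow> real" where "Aip = AiSp"

lemma Ai_deriv: "(Airy_Ai has_real_derivative Aip x) (at x)"
  unfolding Airy_Ai_AiS Aip_def by (rule AiS_deriv)

lemma Aip_deriv: "(Aip has_real_derivative x * Airy_Ai x) (at x)"
  unfolding Airy_Ai_AiS Aip_def by (rule AiSp_deriv)

lemma deriv_Ai: "deriv Airy_Ai = Aip"
  by (rule ext) (rule DERIV_imp_deriv[OF Ai_deriv])

lemma Ai_0: "Airy_Ai 0 = C1"
proof -
  have "Airy_Ai 0 = (\<Sum>n. ca n * 0 ^ n)" by (simp add: Airy_Ai_eq)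
  also have "\<dots> = ca 0" by (rule powser_zero)
  finally show ?thesis by (simp add: ca_def cf_def cg_def alpha_def)
qed

lemma Aip_0: "Aip 0 = - C2"
proof -
  have "Aip 0 = (\<Sum>n. diffs ca n * 0 ^ n)" by (simp add: Aip_def AiSp_def)
  also have "\<dots> = diffs ca 0" by (rule powser_zero)
  finally show ?thesis by (simp add: diffs_def ca_def cf_def cg_def beta_def)
qed

lemma AiS_complex: "AiS (complex_of_real x) = complex_of_real (Airy_Ai x)"
proof -
  have "complex_of_real (Airy_Ai x) = complex_of_real (\<Sum>n. ca n * x ^ n)" by (simp add: Airy_Ai_eq)
  also have "\<dots> = (\<Sum>n. complex_of_real (ca n * x ^ n))"
    by (rule suminf_of_real) (use summable_ca_gen[of x] in simp)
  finally show ?thesis by (simp add: AiS_def)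
qed

lemma AiSp_complex: "AiSp (complex_of_real x) = complex_of_real (Aip x)"
proof -
  have "complex_of_real (Aip x) = complex_of_real (\<Sum>n. diffs ca n * x ^ n)" by (simp add: Aip_def AiSp_def)
  also have "\<dots> = (\<Sum>n. complex_of_real (diffs ca n * x ^ n))"
    by (rule suminf_of_real) (use summable_dca_gen[of x] in simp)
  finally show ?thesis by (simp add: AiSp_def)
qed

definition airy_sol :: "(real \<Rightarrow> real) \<Rightarrow> (real \<Rightarrow> real) \<Rightarrow> bool" where
  "airy_sol y y' \<longleftrightarrow> (\<forall>x. (y has_real_derivative y' x) (at x)) \<and> (\<forall>x. (y' has_real_derivative x * y x) (at x))"

lemma airy_sol_Ai: "airy_sol Airy_Ai Aip"
  using Ai_deriv Aip_deriv by (simp add: airy_sol_def)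

lemma airy_sol_diff:
  assumes "airy_sol y y'" "airy_sol z z'"
  shows "airy_sol (\<lambda>x. y x - z x) (\<lambda>x. y' x - z' x)"
  using assms unfolding airy_sol_def
  by (auto intro!: derivative_eq_intros simp: algebra_simps)

lemma airy_sol_uminus:
  assumes "airy_sol y y'"
  shows "airy_sol (\<lambda>x. - y x) (\<lambda>x. - y' x)"
  using assms unfolding airy_sol_def
  by (auto intro!: derivative_eq_intros)

lemma two_abs_mult_le: "2 * \<bar>p * q\<bar> \<le> p^2 + (q::real)^2"
proof -
  have "0 \<le> (\<bar>p\<bar> - \<bar>q\<bar>)^2" by simp
  then show ?thesis by (simp add: power2_eq_square abs_mult algebra_simps)
qed

lemma energy_bound:
  fixes s L p q :: real
  assumes "\<bar>s\<bar> + 1 \<le> L"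
  shows "\<bar>2 * (1 + s) * (p * q)\<bar> \<le> L * (p^2 + q^2)"
proof -
  have "\<bar>2 * (1 + s) * (p * q)\<bar> = \<bar>1 + s\<bar> * (2 * \<bar>p * q\<bar>)" by (simp only: abs_mult abs_numeral mult_ac)
  also have "\<dots> \<le> L * (p^2 + q^2)"
    using assms two_abs_mult_le[of p q] by (intro mult_mono) auto
  finally show ?thesis .
qed

lemma airy_unique:
  assumes sol: "airy_sol y y'" and a: "y a = 0" "y' a = 0"
  shows "y x = 0"
proof -
  from sol have dy: "\<And>x. (y has_real_derivative y' x) (at x)"
    and dy': "\<And>x. (y' has_real_derivative x * y x) (at x)" by (auto simp: airy_sol_def)
  define L where "L = \<bar>a\<bar> + \<bar>x\<bar> + 1"
  define E where "E = (\<lambda>s. (y s)^2 + (y' s)^2)"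
  have dE: "(E has_real_derivative 2 * (1 + s) * (y s * y' s)) (at s)" for s
    unfolding E_def by (rule derivative_eq_intros dy dy' refl)+ (simp add: algebra_simps)
  have E0: "E a = 0" using a by (simp add: E_def)
  have Enn: "E s \<ge> 0" for s by (simp add: E_def)
  have "E x = 0"
  proof (cases "a \<le> x")
    case True
    define G where "G = (\<lambda>s. exp (- L * (s - a)) * E s)"
    have "G x \<le> G a"
    proof (rule DERIV_nonpos_imp_nonincreasing[OF True])
      fix s assume s: "a \<le> s" "s \<le> x"
      have "(G has_real_derivative exp (- L * (s - a)) * (- L * E s + 2 * (1 + s) * (y s * y' s))) (at s)"
        unfolding G_def by (rule derivative_eq_intros dE refl)+ (simp add: algebra_simps)
      moreover have "- L * E s + 2 * (1 + s) * (y s * y' s) \<le> 0"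
      proof -
        have "\<bar>s\<bar> + 1 \<le> L" using s unfolding L_def by linarith
        from energy_bound[OF this, of "y s" "y' s"] show ?thesis unfolding E_def by linarith
      qed
      ultimately show "\<exists>d. (G has_real_derivative d) (at s) \<and> d \<le> 0"
        by (meson exp_ge_zero mult_nonneg_nonpos)
    qed
    then have "exp (- L * (x - a)) * E x \<le> 0" using E0 by (simp add: G_def)
    then have "E x \<le> 0" by (simp add: mult_le_0_iff)
    then show ?thesis using Enn[of x] by linarith
  next
    case False
    define G where "G = (\<lambda>s. exp (L * (s - a)) * E s)"
    have "G x \<le> G a"
    proof (rule DERIV_nonneg_imp_nondecreasing[of x a G])
      show "x \<le> a" using False by simp
      fix s assume s: "x \<le> s" "s \<le> a"
      have "(G has_real_derivative exp (L * (s - a)) * (L * E s + 2 * (1 + s) * (y s * y' s))) (at s)"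
        unfolding G_def by (rule derivative_eq_intros dE refl)+ (simp add: algebra_simps)
      moreover have "L * E s + 2 * (1 + s) * (y s * y' s) \<ge> 0"
      proof -
        have "\<bar>s\<bar> + 1 \<le> L" using s unfolding L_def by linarith
        from energy_bound[OF this, of "y s" "y' s"] show ?thesis unfolding E_def by linarith
      qed
      ultimately show "\<exists>d. (G has_real_derivative d) (at s) \<and> 0 \<le> d"
        by (meson exp_ge_zero mult_nonneg_nonneg)
    qed
    then have "exp (L * (x - a)) * E x \<le> 0" using E0 by (simp add: G_def)
    then have "E x \<le> 0" by (simp add: mult_le_0_iff)
    then show ?thesis using Enn[of x] by linarith
  qed
  then show ?thesis unfolding E_def by (simp add: add_nonneg_eq_0_iff)
qed

lemma airy_sol_cont: "airy_sol y y' \<Longrightarrow> continuous_on A y"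
  unfolding airy_sol_def by (meson DERIV_isCont continuous_at_imp_continuous_on)

lemma sturm_pos:
  assumes sol: "airy_sol y y'" and c: "c + pi \<le> -1" and pos: "\<forall>s\<in>{c..c+pi}. y s > 0"
  shows False
proof -
  from sol have dy: "\<And>x. (y has_real_derivative y' x) (at x)"
    and dy': "\<And>x. (y' has_real_derivative x * y x) (at x)" by (auto simp: airy_sol_def)
  define W where "W = (\<lambda>s. y' s * sin (s - c) - y s * cos (s - c))"
  have "W (c + pi) \<le> W c"
  proof (rule DERIV_nonpos_imp_nonincreasing[of c "c+pi" W])
    show "c \<le> c + pi" using pi_gt_zero by linarith
    fix s assume s: "c \<le> s" "s \<le> c + pi"
    have "(W has_real_derivative (s + 1) * y s * sin (s - c)) (at s)"
      unfolding W_def by (rule derivative_eq_intros dy dy' refl)+ (simp add: algebra_simps)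
    moreover have "sin (s - c) \<ge> 0" using s by (intro sin_ge_zero) auto
    moreover have "s + 1 \<le> 0" using s c by linarith
    moreover have "y s > 0" using pos s by auto
    ultimately show "\<exists>d. (W has_real_derivative d) (at s) \<and> d \<le> 0"
      by (meson less_imp_le mult_nonpos_nonneg)
  qed
  moreover have "W (c + pi) = y (c + pi)" "W c = - y c" by (simp_all add: W_def)
  moreover have "y c > 0" "y (c + pi) > 0" using pos pi_gt_zero by auto
  ultimately show False by linarith
qed

lemma sturm_zero:
  assumes sol: "airy_sol y y'" and c: "c + pi \<le> -1"
  shows "\<exists>s\<in>{c..c+pi}. y s = 0"
proof (rule ccontr)
  assume nz: "\<not> ?thesis"
  have cont: "continuous_on A y" for A using airy_sol_cont[OF sol] .
  have le: "c \<le> c + pi" using pi_gt_zero by linarith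
  show False
  proof (cases "y c > 0")
    case True
    have "\<forall>s\<in>{c..c+pi}. y s > 0"
    proof
      fix s assume s: "s \<in> {c..c+pi}"
      show "y s > 0"
      proof (rule ccontr)
        assume "\<not> y s > 0"
        then have "y s \<le> 0" by simp
        then obtain t where "c \<le> t" "t \<le> s" "y t = 0"
          using IVT2'[of y s 0 c] True s cont by force
        then show False using nz s by auto
      qed
    qed
    then show False using sturm_pos[OF sol c] by blast
  next
    case False
    then have yc: "y c < 0" using nz le by force
    have "\<forall>s\<in>{c..c+pi}. - y s > 0"
    proof
      fix s assume s: "s \<in> {c..c+pi}"
      show "- y s > 0"
      proof (rule ccontr)
        assume "\<not> - y s > 0"
        then have "y s \<ge> 0" by simp
        then obtain t where "c \<le> t" "t \<le> s" "y t = 0"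
          using IVT'[of y c 0 s] yc s cont by force
        then show False using nz s by auto
      qed
    qed
    then show False using sturm_pos[OF airy_sol_uminus[OF sol] c] by blast
  qed
qed

lemma bounded_pos:
  assumes sol: "airy_sol y y'" and B: "\<And>x. x \<ge> 0 \<Longrightarrow> \<bar>y x\<bar> \<le> B"
    and y0: "y 0 > 0" and y'0: "y' 0 < 0"
  shows "\<And>x. x \<ge> 0 \<Longrightarrow> y x > 0 \<and> y' x < 0"
proof -
  from sol have dy: "\<And>x. (y has_real_derivative y' x) (at x)"
    and dy': "\<And>x. (y' has_real_derivative x * y x) (at x)" by (auto simp: airy_sol_def)
  define q where "q = (\<lambda>s. y s * y' s)"
  have dq: "(q has_real_derivative (y' s)^2 + s * (y s)^2) (at s)" for s
    unfolding q_def by (rule derivative_eq_intros dy dy' refl)+ (simp add: power2_eq_square algebra_simps)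
  have q_mono: "q s \<le> q t" if "0 \<le> s" "s \<le> t" for s t
  proof (rule DERIV_nonneg_imp_nondecreasing[of s t q])
    fix r assume "s \<le> r" "r \<le> t"
    then show "\<exists>d. (q has_real_derivative d) (at r) \<and> 0 \<le> d"
      using dq that by (intro exI[of _ "(y' r)^2 + r * (y r)^2"]) auto
  qed fact
  have q_nonpos: "q p \<le> 0" if p: "p \<ge> 0" for p
  proof (rule ccontr)
    assume "\<not> q p \<le> 0"
    then have qp: "q p > 0" by simp
    define h where "h = (\<lambda>s. (y s)^2 - 2 * q p * s)"
    have hmono: "h p \<le> h s" if "p \<le> s" for s
    proof (rule DERIV_nonneg_imp_nondecreasing[of p s h])
      fix r assume r: "p \<le> r" "r \<le> s"
      have "(h has_real_derivative 2 * q r - 2 * q p) (at r)"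
        unfolding h_def q_def by (rule derivative_eq_intros dy refl)+ (simp add: algebra_simps)
      moreover have "q p \<le> q r" using q_mono[of p r] r p by simp
      ultimately show "\<exists>d. (h has_real_derivative d) (at r) \<and> 0 \<le> d" by force
    qed fact
    define s where "s = p + (B^2 + 1) / (2 * q p)"
    have sp: "p \<le> s" using qp by (simp add: s_def)
    have "h p \<le> h s" using hmono[OF sp] .
    then have "(y s)^2 \<ge> 2 * q p * (s - p)" unfolding h_def
      by (smt (verit) zero_le_power2 right_diff_distrib)
    also have "2 * q p * (s - p) = B^2 + 1" using qp by (simp add: s_def)
    finally have "(y s)^2 \<ge> B^2 + 1" .
    moreover have "\<bar>y s\<bar> \<le> B" using B sp p by simp
    then have "(y s)^2 \<le> B^2"
      by (metis abs_ge_zero order_trans power2_abs power_mono)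
    ultimately show False by linarith
  qed
  have dq_pos: "(y' s)^2 + s * (y s)^2 > 0" if "s \<ge> 0" for s
  proof (cases "s = 0")
    case True then show ?thesis using y'0 by simp
  next
    case False
    then have s: "s > 0" using that by simp
    show ?thesis
    proof (rule ccontr)
      assume "\<not> ?thesis"
      then have "(y' s)^2 + s * (y s)^2 \<le> 0" by simp
      moreover have "(y' s)^2 \<ge> 0" "s * (y s)^2 \<ge> 0" using s by auto
      ultimately have "(y' s)^2 = 0" "s * (y s)^2 = 0" by linarith+
      then have "y' s = 0" "y s = 0" using s by auto
      then have "y 0 = 0" using airy_unique[OF sol] by blast
      then show False using y0 by simp
    qed
  qed
  have q_neg: "q x < 0" if "x \<ge> 0" for x
  proof -
    have "q x < q (x + 1)"
    proof (rule DERIV_pos_imp_increasing[of x "x+1" q])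
      fix r assume "x \<le> r" "r \<le> x + 1"
      then show "\<exists>d. (q has_real_derivative d) (at r) \<and> 0 < d"
        using dq dq_pos that by (intro exI[of _ "(y' r)^2 + r * (y r)^2"]) auto
    qed simp
    then show ?thesis using q_nonpos[of "x+1"] that by simp
  qed
  fix x :: real assume x: "x \<ge> 0"
  have yx: "y x > 0"
  proof (rule ccontr)
    assume "\<not> y x > 0"
    then have "y x \<le> 0" by simp
    then obtain t where t: "0 \<le> t" "t \<le> x" "y t = 0"
      using IVT2'[of y x 0 0] y0 x airy_sol_cont[OF sol] by force
    then show False using q_neg[of t] by (simp add: q_def)
  qed
  moreover have "y' x < 0" using q_neg[OF x] yx by (simp add: q_def mult_less_0_iff)
  ultimately show "y x > 0 \<and> y' x < 0" by simp
qed

lemma riccati_neg: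
  assumes sol: "airy_sol y y'" and pos: "\<And>x. x \<ge> 0 \<Longrightarrow> y x > 0 \<and> y' x < 0"
    and t0: "t0 \<ge> 0"
  shows "t0 * (y t0)^2 - (y' t0)^2 < 0"
proof (rule ccontr)
  from sol have dy: "\<And>x. (y has_real_derivative y' x) (at x)"
    and dy': "\<And>x. (y' has_real_derivative x * y x) (at x)" by (auto simp: airy_sol_def)
  assume "\<not> ?thesis"
  then have m0: "t0 * (y t0)^2 - (y' t0)^2 \<ge> 0" by simp
  define m where "m = (\<lambda>s. s * (y s)^2 - (y' s)^2)"
  have dm: "(m has_real_derivative (y s)^2) (at s)" for s
    unfolding m_def by (rule derivative_eq_intros dy dy' refl)+ (simp add: power2_eq_square algebra_simps)
  have m_pos: "m s > 0" if "s > t0" for s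
  proof -
    have "m t0 < m s"
    proof (rule DERIV_pos_imp_increasing[of t0 s m])
      fix r assume "t0 \<le> r" "r \<le> s"
      then have "y r > 0" using pos t0 by auto
      then show "\<exists>d. (m has_real_derivative d) (at r) \<and> 0 < d"
        using dm by (intro exI[of _ "(y r)^2"]) auto
    qed fact
    then show ?thesis using m0 by (simp add: m_def)
  qed
  define u where "u = (\<lambda>s. y' s / y s)"
  have du: "(u has_real_derivative s - (u s)^2) (at s)" if "s \<ge> 0" for s
  proof -
    have ys: "y s \<noteq> 0" using pos[OF that] by simp
    have "(u has_real_derivative (s * y s * y s - y' s * y' s) / (y s * y s)) (at s)"
      unfolding u_def by (rule derivative_eq_intros dy dy' refl ys)+ 
    moreover have "(s * y s * y s - y' s * y' s) / (y s * y s) = s - (u s)^2"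
      using ys by (simp add: u_def field_simps power2_eq_square)
    ultimately show ?thesis by simp
  qed
  have u_neg: "u s < 0" if "s \<ge> 0" for s
    using pos[OF that] by (simp add: u_def divide_neg_pos)
  define t1 where "t1 = t0 + 1"
  define c where "c = - u t1"
  have c: "c > 0" using u_neg[of t1] t0 by (simp add: c_def t1_def)
  have u_ge: "u s \<ge> - c" if "s \<ge> t1" for s
  proof -
    have "u t1 \<le> u s"
    proof (rule DERIV_nonneg_imp_nondecreasing[of t1 s u])
      fix r assume r: "t1 \<le> r" "r \<le> s"
      have "r > t0" "r \<ge> 0" using r t0 by (auto simp: t1_def)
      have "s' - (u s')^2 = m s' / (y s')^2" if "s' \<ge> 0" for s'
        using pos[OF that] by (simp add: u_def m_def field_simps power2_eq_square)
      then have "r - (u r)^2 > 0" using m_pos[OF \<open>r > t0\<close>] pos[OF \<open>r \<ge> 0\<close>] \<open>r \<ge> 0\<close> by simp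
      then show "\<exists>d. (u has_real_derivative d) (at r) \<and> 0 \<le> d"
        using du[OF \<open>r \<ge> 0\<close>] by (intro exI[of _ "r - (u r)^2"]) auto
    qed fact
    then show ?thesis by (simp add: c_def)
  qed
  define S0 where "S0 = t1 + c^2 + 1"
  define S1 where "S1 = S0 + c + 1"
  have "u S0 - S0 \<le> u S1 - S1"
  proof (rule DERIV_nonneg_imp_nondecreasing[of S0 S1 "\<lambda>s. u s - s"])
    show "S0 \<le> S1" using c by (simp add: S1_def)
    fix r assume r: "S0 \<le> r" "r \<le> S1"
    have "c^2 \<ge> 0" by simp
    then have r0: "r \<ge> 0" "r \<ge> t1" using r t0 c unfolding S0_def t1_def by linarith+
    have "- c \<le> u r" "u r < 0" using u_ge[OF r0(2)] u_neg[OF r0(1)] by auto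
    then have "(u r)^2 \<le> c^2"
      by (metis abs_of_neg abs_le_square_iff less_eq_real_def minus_le_iff abs_of_pos c)
    then have "r - (u r)^2 - 1 \<ge> 0" using r t0 unfolding S0_def t1_def by linarith
    moreover have "((\<lambda>s. u s - s) has_real_derivative (r - (u r)^2) - 1) (at r)"
      using DERIV_diff[OF du[OF r0(1)] DERIV_ident] by simp
    ultimately show "\<exists>d. ((\<lambda>s. u s - s) has_real_derivative d) (at r) \<and> 0 \<le> d" by blast
  qed
  moreover have "u S0 \<ge> - c" using u_ge[of S0] c by (simp add: S0_def)
  moreover have "u S1 < 0" using u_neg[of S1] t0 c by (simp add: S1_def S0_def t1_def)
  ultimately show False by (simp add: S1_def)
qed

lemma exp_tail_integrable:
  fixes h :: "real \<Rightarrow> real"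
  assumes cont: "continuous_on {a..} h" and bd: "\<And>r. r \<ge> a \<Longrightarrow> \<bar>h r\<bar> \<le> C * exp (-r)"
  shows "h integrable_on {a..}"
proof (rule measurable_bounded_by_integrable_imp_integrable_real)
  show "h \<in> borel_measurable (lebesgue_on {a..})"
    by (rule continuous_imp_measurable_on_sets_lebesgue[OF cont]) auto
  show "(\<lambda>r. C * exp (-r)) integrable_on {a..}"
    using integrable_on_cmult_left[OF integrable_on_exp_minus_to_infinity[of 1 a], of C] by simp
  show "\<And>x. x \<in> {a..} \<Longrightarrow> \<bar>h x\<bar> \<le> C * exp (- x)" using bd by auto
qed auto

lemma exp_tail_bound:
  fixes h :: "real \<Rightarrow> real"
  assumes cont: "continuous_on {0..} h" and bd: "\<And>r. r \<ge> 0 \<Longrightarrow> \<bar>h r\<bar> \<le> C * exp (-r)"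
    and n: "n \<ge> 0"
  shows "\<bar>integral {0..} h - integral {0..n} h\<bar> \<le> C * exp (-n)"
proof -
  have i1: "h integrable_on {n..}"
    by (rule exp_tail_integrable[of n h C]) (use cont bd n in \<open>auto intro: continuous_on_subset\<close>)
  have i0: "h integrable_on {0..n}"
    by (rule integrable_continuous_interval) (use cont in \<open>auto intro: continuous_on_subset\<close>)
  have "(h has_integral (integral {0..n} h + integral {n..} h)) ({0..n} \<union> {n..})"
  proof (rule has_integral_Un)
    have "{0..n} \<inter> {n..} = {n}" using n by auto
    then show "negligible ({0..n} \<inter> {n..})" by simp
  qed (use i0 i1 in auto)
  moreover have "{0..n} \<union> {n..} = {0::real..}" using n by auto
  ultimately have e: "integral {0..} h = integral {0..n} h + integral {n..} h"
    by (metis integral_unique)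
  have "\<bar>integral {n..} h\<bar> \<le> integral {n..} (\<lambda>r. C * exp (-r))"
  proof -
    have ig: "(\<lambda>r. C * exp (-r)) integrable_on {n..}"
      using integrable_on_cmult_left[OF integrable_on_exp_minus_to_infinity[of 1 n], of C] by simp
    have "\<And>x. x \<in> {n..} \<Longrightarrow> norm (h x) \<le> C * exp (- x)" using bd n by auto
    from integral_norm_bound_integral[OF i1 ig this] show ?thesis by simp
  qed
  also have "integral {n..} (\<lambda>r. C * exp (-r)) = C * exp (-n)"
  proof -
    have "((\<lambda>r. C * exp (-1 * r)) has_integral C * (exp (-1 * n) / 1)) {n..}"
      by (intro has_integral_mult_right has_integral_exp_minus_to_infinity) simp
    then have "((\<lambda>r. C * exp (-r)) has_integral C * exp (-n)) {n..}" by simp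
    then show ?thesis by (rule integral_unique)
  qed
  finally show ?thesis using e by simp
qed

lemma param_deriv:
  fixes F F' :: "real \<Rightarrow> real \<Rightarrow> real"
  assumes dF: "\<And>x r. ((\<lambda>x. F x r) has_real_derivative F' x r) (at x)"
    and cF: "continuous_on UNIV (\<lambda>(x,r). F x r)" and cF': "continuous_on UNIV (\<lambda>(x,r). F' x r)"
    and bF: "\<And>R. \<exists>C. \<forall>x r. \<bar>x\<bar> \<le> R \<longrightarrow> r \<ge> 0 \<longrightarrow> \<bar>F x r\<bar> \<le> C * exp (-r) \<and> \<bar>F' x r\<bar> \<le> C * exp (-r)"
  shows "((\<lambda>x. integral {0..} (F x)) has_real_derivative integral {0..} (F' x0)) (at x0)"
proof -
  obtain C where C: "\<And>x r. \<bar>x\<bar> \<le> \<bar>x0\<bar> + 1 \<Longrightarrow> r \<ge> 0 \<Longrightarrow> \<bar>F x r\<bar> \<le> C * exp (-r) \<and> \<bar>F' x r\<bar> \<le> C * exp (-r)"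
    using bF[of "\<bar>x0\<bar> + 1"] by blast
  define S where "S = ball x0 1"
  have xS: "\<bar>x\<bar> \<le> \<bar>x0\<bar> + 1" if "x \<in> S" for x
    using that by (auto simp: S_def dist_real_def)
  have contFx: "continuous_on A (F x)" for x A
  proof -
    have "continuous_on UNIV ((\<lambda>(x,r). F x r) \<circ> (\<lambda>r. (x, r)))"
      by (rule continuous_on_compose[OF _ continuous_on_subset[OF cF]]) (auto intro!: continuous_intros)
    then show ?thesis by (auto simp: o_def intro: continuous_on_subset)
  qed
  have contF'x: "continuous_on A (F' x)" for x A
  proof -
    have "continuous_on UNIV ((\<lambda>(x,r). F' x r) \<circ> (\<lambda>r. (x, r)))"
      by (rule continuous_on_compose[OF _ continuous_on_subset[OF cF']]) (auto intro!: continuous_intros)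
    then show ?thesis by (auto simp: o_def intro: continuous_on_subset)
  qed
  define f where "f n x = integral {0..real n} (F x)" for n x
  define D where "D n x = integral {0..real n} (F' x)" for n x
  define B where "B x = integral {0..} (F' x)" for x
  have derf: "(f n has_field_derivative D n x) (at x within S)" if "x \<in> S" for n x
    unfolding f_def D_def cbox_interval[symmetric]
  proof (rule leibniz_rule_field_derivative[OF _ _ _ that])
    show "\<And>x t. x \<in> S \<Longrightarrow> t \<in> cbox 0 (real n) \<Longrightarrow> ((\<lambda>x. F x t) has_field_derivative F' x t) (at x within S)"
      using dF by (auto intro: has_field_derivative_at_within)
    show "\<And>x. x \<in> S \<Longrightarrow> F x integrable_on cbox 0 (real n)"
      by (rule integrable_continuous) (rule contFx)
    show "continuous_on (S \<times> cbox 0 (real n)) (\<lambda>(x, t). F' x t)"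
      by (rule continuous_on_subset[OF cF']) auto
    show "convex S" by (simp add: S_def)
  qed
  have tailF: "\<bar>integral {0..} (F x) - f n x\<bar> \<le> C * exp (- real n)" if "x \<in> S" for n x
    unfolding f_def by (rule exp_tail_bound) (use contFx C xS[OF that] in auto)
  have tailF': "\<bar>B x - D n x\<bar> \<le> C * exp (- real n)" if "x \<in> S" for n x
    unfolding D_def B_def by (rule exp_tail_bound) (use contF'x C xS[OF that] in auto)
  have exp0: "(\<lambda>n. C * exp (- real n)) \<longlonglongrightarrow> 0"
  proof -
    have "(\<lambda>n. exp (- real n)) \<longlonglongrightarrow> 0"
      using filterlim_compose[OF exp_at_bot filterlim_uminus_at_bot_at_top[THEN filterlim_compose, OF filterlim_real_sequentially]]
      by simp
    then show ?thesis using tendsto_mult_right_zero by blast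
  qed
  have limf: "(\<lambda>n. f n x) \<longlonglongrightarrow> integral {0..} (F x)" if "x \<in> S" for x
  proof -
    have "(\<lambda>n. f n x - integral {0..} (F x)) \<longlonglongrightarrow> 0"
      by (rule Lim_null_comparison[OF _ exp0]) (use tailF[OF that] in \<open>auto simp: abs_minus_commute\<close>)
    then show ?thesis by (simp add: LIM_zero_iff)
  qed
  have x0S: "x0 \<in> S" by (simp add: S_def)
  obtain g where g: "\<And>x. x \<in> S \<Longrightarrow> (\<lambda>n. f n x) \<longlonglongrightarrow> g x \<and> (g has_derivative (\<lambda>h. h * B x)) (at x within S)"
  proof -
    have "\<exists>g. \<forall>x\<in>S. (\<lambda>n. f n x) \<longlonglongrightarrow> g x \<and> (g has_derivative (\<lambda>h. h * B x)) (at x within S)"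
    proof (rule has_derivative_sequence[of S f "\<lambda>n x h. h * D n x" "\<lambda>x h. h * B x" x0])
      show "convex S" by (simp add: S_def)
      show "\<And>n x. x \<in> S \<Longrightarrow> (f n has_derivative (\<lambda>h. h * D n x)) (at x within S)"
      proof -
        have "(\<lambda>h. h * D n x) = (*) (D n x)" for n x by (rule ext) (simp add: mult.commute)
        then show "\<And>n x. x \<in> S \<Longrightarrow> (f n has_derivative (\<lambda>h. h * D n x)) (at x within S)"
          using derf by (simp add: has_field_derivative_def)
      qed
      show "\<forall>\<^sub>F n in sequentially. \<forall>x\<in>S. \<forall>h. norm (h * D n x - h * B x) \<le> e * norm h" if e: "e > 0" for e
      proof -
        have "\<forall>\<^sub>F n in sequentially. C * exp (- real n) < e"
          using order_tendstoD(2)[OF exp0 e] .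
        then show ?thesis
        proof (rule eventually_mono)
          fix n assume n: "C * exp (- real n) < e"
          show "\<forall>x\<in>S. \<forall>h. norm (h * D n x - h * B x) \<le> e * norm h"
          proof (intro ballI allI)
            fix x h assume "x \<in> S"
            have "norm (h * D n x - h * B x) = \<bar>h\<bar> * \<bar>B x - D n x\<bar>"
              by (simp add: abs_mult right_diff_distrib[symmetric] abs_minus_commute)
            also have "\<dots> \<le> \<bar>h\<bar> * e"
              using tailF'[OF \<open>x \<in> S\<close>, of n] n by (intro mult_left_mono) auto
            finally show "norm (h * D n x - h * B x) \<le> e * norm h" by (simp add: mult.commute)
          qed
        qed
      qed
      show "x0 \<in> S" by (fact x0S)
      show "(\<lambda>n. f n x0) \<longlonglongrightarrow> integral {0..} (F x0)" by (rule limf[OF x0S])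
    qed
    then show ?thesis using that by blast
  qed
  have geq: "g x = integral {0..} (F x)" if "x \<in> S" for x
    using LIMSEQ_unique[OF conjunct1[OF g[OF that]] limf[OF that]] .
  have "(\<lambda>h. h * B x0) = (*) (B x0)" by (rule ext) (simp add: mult.commute)
  then have "(g has_field_derivative B x0) (at x0)"
    using conjunct2[OF g[OF x0S]] at_within_open[OF x0S] unfolding has_field_derivative_def
    by (simp add: S_def)
  then have "(g has_field_derivative integral {0..} (F' x0)) (at x0)" by (simp add: B_def)
  moreover have "open S" by (simp add: S_def)
  ultimately show ?thesis
    using has_field_derivative_transform_within_open[of g _ x0 S "\<lambda>x. integral {0..} (F x)"] geq x0S
    by blast
qed

lemma pow_le_fact_exp: "r \<ge> 0 \<Longrightarrow> r ^ k \<le> fact k * exp (r::real)"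
proof -
  assume r: "r \<ge> 0"
  have "sum (\<lambda>n. r ^ n /\<^sub>R fact n) {k} \<le> (\<Sum>n. r ^ n /\<^sub>R fact n)"
    by (rule sum_le_suminf[OF summable_exp_generic]) (use r in auto)
  then have "r ^ k / fact k \<le> exp r" by (simp add: exp_def divide_inverse mult.commute)
  then show ?thesis by (simp add: divide_le_eq mult.commute)
qed

lemma cubic_bound: "K \<ge> 1 \<Longrightarrow> r \<ge> 0 \<Longrightarrow> K * r - r^3/3 \<le> 3 * K^2" for K r :: real
proof -
  assume K: "K \<ge> 1" and r: "r \<ge> 0"
  show ?thesis
  proof (cases "r \<le> 3*K")
    case True
    then have "K * r \<le> K * (3*K)" using K by (intro mult_left_mono) auto
    moreover have "r^3/3 \<ge> 0" using r by simp
    moreover have "K * (3*K) = 3 * K^2" by (simp add: power2_eq_square)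
    ultimately show ?thesis by linarith
  next
    case False
    then have "r \<ge> 3*K" by simp
    then have "r * r \<ge> (3*K) * (3*K)" using K by (intro mult_mono) auto
    moreover have "(3*K) * (3*K) \<ge> 3*K" using K by (simp add: algebra_simps)
    ultimately have "r*r \<ge> 3*K" by linarith
    then have "r * (r*r) \<ge> r * (3*K)" using r by (intro mult_left_mono) auto
    then have "r^3/3 \<ge> K * r" by (simp add: power3_eq_cube algebra_simps)
    moreover have "3 * K^2 \<ge> 0" by simp
    ultimately show ?thesis by linarith
  qed
qed

lemma main_bound:
  fixes x r R :: real
  assumes "\<bar>x\<bar> \<le> R" "r \<ge> 0"
  shows "r ^ k * exp (-(r^3/3) - x*r/2) \<le> fact k * exp (3 * (\<bar>R\<bar>+2)^2) * exp (-r)"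
proof -
  have "- x * r / 2 \<le> \<bar>R\<bar> * r"
  proof -
    have "- x * r \<le> \<bar>x\<bar> * r" using assms(2) by (intro mult_right_mono) auto
    also have "\<dots> \<le> \<bar>R\<bar> * r" using assms by (intro mult_right_mono) auto
    finally have "- x * r \<le> \<bar>R\<bar> * r" .
    moreover have "\<bar>R\<bar> * r \<ge> 0" using assms(2) by simp
    ultimately show ?thesis by linarith
  qed
  then have e1: "exp (-(r^3/3) - x*r/2) \<le> exp (-(r^3/3) + \<bar>R\<bar> * r)" by simp
  have "r ^ k * exp (-(r^3/3) - x*r/2) \<le> (fact k * exp r) * exp (-(r^3/3) + \<bar>R\<bar> * r)"
    using pow_le_fact_exp[OF assms(2), of k] e1 by (intro mult_mono) auto
  also have "\<dots> = fact k * (exp r * exp (-(r^3/3) + \<bar>R\<bar> * r))" by (simp add: mult_ac)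
  also have "exp r * exp (-(r^3/3) + \<bar>R\<bar> * r) = exp ((\<bar>R\<bar>+2) * r - r^3/3) * exp (-r)"
    by (simp only: mult_exp_exp) (simp add: algebra_simps)
  also have "fact k * (exp ((\<bar>R\<bar>+2) * r - r^3/3) * exp (-r)) = fact k * exp ((\<bar>R\<bar>+2) * r - r^3/3) * exp (-r)"
    by (simp add: mult_ac)
  also have "\<dots> \<le> fact k * exp (3 * (\<bar>R\<bar>+2)^2) * exp (-r)"
    using cubic_bound[of "\<bar>R\<bar>+2" r] assms(2) by (intro mult_right_mono mult_left_mono) auto
  finally show ?thesis .
qed

definition PP :: "nat \<Rightarrow> real \<Rightarrow> real \<Rightarrow> real \<Rightarrow> real" where
  "PP k \<phi> x r = r ^ k * exp (-(r^3/3) - x*r/2) * sin (\<phi> - sqrt 3 / 2 * x * r)"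

definition II :: "nat \<Rightarrow> real \<Rightarrow> real \<Rightarrow> real" where
  "II k \<phi> x = integral {0..} (PP k \<phi> x)"

lemma PP_bound:
  assumes "\<bar>x\<bar> \<le> R" "r \<ge> 0"
  shows "\<bar>PP k \<phi> x r\<bar> \<le> fact k * exp (3 * (\<bar>R\<bar>+2)^2) * exp (-r)"
proof -
  have "\<bar>PP k \<phi> x r\<bar> = r ^ k * exp (-(r^3/3) - x*r/2) * \<bar>sin (\<phi> - sqrt 3 / 2 * x * r)\<bar>"
    using assms by (simp add: PP_def abs_mult)
  also have "\<dots> \<le> r ^ k * exp (-(r^3/3) - x*r/2) * 1"
    using assms by (intro mult_left_mono) auto
  also have "\<dots> \<le> fact k * exp (3 * (\<bar>R\<bar>+2)^2) * exp (-r)"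
    using main_bound[OF assms] by simp
  finally show ?thesis .
qed

lemma PP_bound_ex: "\<exists>C. \<forall>x r. \<bar>x\<bar> \<le> R \<longrightarrow> r \<ge> 0 \<longrightarrow> \<bar>PP k \<phi> x r\<bar> \<le> C * exp (-r)"
  using PP_bound by blast

lemma PP_cont: "continuous_on UNIV (\<lambda>(x,r). PP k \<phi> x r)"
  unfolding PP_def split_beta' by (intro continuous_intros) auto

lemma PP_cont_r: "continuous_on A (PP k \<phi> x)"
  unfolding PP_def by (intro continuous_intros) auto

lemma PP_integrable: "PP k \<phi> x integrable_on {0..}"
proof -
  obtain C where "\<And>r. r \<ge> 0 \<Longrightarrow> \<bar>PP k \<phi> x r\<bar> \<le> C * exp (-r)"
    using PP_bound_ex[of "\<bar>x\<bar>" k \<phi>] by auto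
  then show ?thesis by (intro exp_tail_integrable PP_cont_r)
qed

lemma sin_plus_pi3: "sin (a + pi/3) = sin a / 2 + sqrt 3 / 2 * cos a"
  by (simp add: sin_add sin_60 cos_60)

lemma PP_dx: "((\<lambda>x. PP k \<phi> x r) has_real_derivative - PP (Suc k) (\<phi> + pi/3) x r) (at x)"
proof -
  define E where "E = (\<lambda>x. -(r^3/3) - (r/2) * x)"
  define T where "T = (\<lambda>x. \<phi> - (sqrt 3 / 2 * r) * x)"
  have i1: "(E has_real_derivative (- r/2)) (at x)"
    unfolding E_def using DERIV_diff[OF DERIV_const DERIV_cmult_Id[of "r/2"]] by simp
  have i2: "(T has_real_derivative (- (sqrt 3 / 2 * r))) (at x)"
    unfolding T_def using DERIV_diff[OF DERIV_const DERIV_cmult_Id[of "sqrt 3 / 2 * r"]] by simp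
  have d1: "((\<lambda>x. exp (E x)) has_real_derivative exp (E x) * (- r/2)) (at x)"
    using DERIV_chain2[OF DERIV_exp i1] .
  have d2: "((\<lambda>x. sin (T x)) has_real_derivative cos (T x) * (- (sqrt 3 / 2 * r))) (at x)"
    using DERIV_chain2[OF DERIV_sin i2] .
  have d3: "((\<lambda>x. r^k * exp (E x)) has_real_derivative r^k * (exp (E x) * (- r/2))) (at x)"
    using DERIV_cmult[OF d1] .
  have d4: "((\<lambda>x. r^k * exp (E x) * sin (T x)) has_real_derivative
     r^k * (exp (E x) * (- r/2)) * sin (T x) + r^k * exp (E x) * (cos (T x) * (- (sqrt 3 / 2 * r)))) (at x)"
    using DERIV_mult[OF d3 d2] by (simp add: mult.commute)
  have a: "\<phi> + pi/3 - sqrt 3 / 2 * x * r = T x + pi/3" by (simp add: T_def)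
  have "- PP (Suc k) (\<phi> + pi/3) x r = - (r * r^k * exp (E x) * (sin (T x) / 2 + sqrt 3 / 2 * cos (T x)))"
    unfolding PP_def a sin_plus_pi3 E_def by (simp add: mult_ac)
  also have "\<dots> = r^k * (exp (E x) * (- r/2)) * sin (T x) + r^k * exp (E x) * (cos (T x) * (- (sqrt 3 / 2 * r)))"
    by (simp add: algebra_simps)
  finally have eq: "r^k * (exp (E x) * (- r/2)) * sin (T x) + r^k * exp (E x) * (cos (T x) * (- (sqrt 3 / 2 * r)))
     = - PP (Suc k) (\<phi> + pi/3) x r" ..
  have f: "(\<lambda>x. PP k \<phi> x r) = (\<lambda>x. r^k * exp (E x) * sin (T x))"
    by (rule ext) (simp add: PP_def E_def T_def mult_ac)
  show ?thesis unfolding f using d4 eq by simp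
qed

lemma II_deriv: "(II k \<phi> has_real_derivative - II (Suc k) (\<phi> + pi/3) x) (at x)"
proof -
  have "((\<lambda>x. integral {0..} (PP k \<phi> x)) has_real_derivative integral {0..} (\<lambda>r. - PP (Suc k) (\<phi> + pi/3) x r)) (at x)"
  proof (rule param_deriv)
    show "\<And>x r. ((\<lambda>x. PP k \<phi> x r) has_real_derivative - PP (Suc k) (\<phi> + pi / 3) x r) (at x)"
      by (rule PP_dx)
    show "continuous_on UNIV (\<lambda>(x, r). PP k \<phi> x r)" by (rule PP_cont)
    show "continuous_on UNIV (\<lambda>(x, r). - PP (Suc k) (\<phi> + pi / 3) x r)"
      using continuous_on_minus[OF PP_cont[of "Suc k" "\<phi> + pi/3"]] by (simp add: split_beta')
    fix R
    obtain C1 where C1: "\<forall>x r. \<bar>x\<bar> \<le> R \<longrightarrow> r \<ge> 0 \<longrightarrow> \<bar>PP k \<phi> x r\<bar> \<le> C1 * exp (-r)"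
      using PP_bound_ex by blast
    obtain C2 where C2: "\<forall>x r. \<bar>x\<bar> \<le> R \<longrightarrow> r \<ge> 0 \<longrightarrow> \<bar>PP (Suc k) (\<phi> + pi/3) x r\<bar> \<le> C2 * exp (-r)"
      using PP_bound_ex by blast
    show "\<exists>C. \<forall>x r. \<bar>x\<bar> \<le> R \<longrightarrow> 0 \<le> r \<longrightarrow> \<bar>PP k \<phi> x r\<bar> \<le> C * exp (- r) \<and> \<bar>- PP (Suc k) (\<phi> + pi / 3) x r\<bar> \<le> C * exp (- r)"
    proof (intro exI[of _ "max C1 C2"] allI impI conjI)
      fix x r :: real assume "\<bar>x\<bar> \<le> R" "0 \<le> r"
      have m: "C1 * exp (-r) \<le> max C1 C2 * exp (-r)" "C2 * exp (-r) \<le> max C1 C2 * exp (-r)"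
        by (intro mult_right_mono; simp)+
      have p1: "\<bar>PP k \<phi> x r\<bar> \<le> C1 * exp (-r)" using C1 \<open>\<bar>x\<bar> \<le> R\<close> \<open>0 \<le> r\<close> by blast
      have p2: "\<bar>PP (Suc k) (\<phi> + pi/3) x r\<bar> \<le> C2 * exp (-r)" using C2 \<open>\<bar>x\<bar> \<le> R\<close> \<open>0 \<le> r\<close> by blast
      show "\<bar>PP k \<phi> x r\<bar> \<le> max C1 C2 * exp (- r)" using p1 m by linarith
      have "\<bar>- PP (Suc k) (\<phi> + pi / 3) x r\<bar> = \<bar>PP (Suc k) (\<phi> + pi / 3) x r\<bar>" by simp
      then show "\<bar>- PP (Suc k) (\<phi> + pi / 3) x r\<bar> \<le> max C1 C2 * exp (- r)" using p2 m by linarith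
    qed
  qed
  then show ?thesis unfolding II_def by (simp add: integral_neg)
qed

lemma PP_bound_x:
  obtains C where "\<And>r. r \<ge> 0 \<Longrightarrow> \<bar>PP k \<phi> x r\<bar> \<le> C * exp (-r)"
  using PP_bound_ex[of "\<bar>x\<bar>" k \<phi>] by auto

lemma ode_identity: "II 2 pi x = x * II 0 (pi/3) x"
proof -
  define G where "G = (\<lambda>r. PP 0 0 x r)"
  define g' where "g' = (\<lambda>r. PP 2 pi x r - x * PP 0 (pi/3) x r)"
  have dG: "(G has_real_derivative g' r) (at r)" for r
  proof -
    define E where "E = (\<lambda>r. -(r^3/3) - (x/2) * r)"
    define T where "T = (\<lambda>r. - (sqrt 3 / 2 * x) * r)"
    have i1: "(E has_real_derivative (- (r^2) - x/2)) (at r)"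
      unfolding E_def by (intro derivative_eq_intros) (auto simp: power2_eq_square)
    have i2: "(T has_real_derivative (- (sqrt 3 / 2 * x))) (at r)"
      unfolding T_def using DERIV_cmult_Id[of "- (sqrt 3 / 2 * x)"] by simp
    have d1: "((\<lambda>r. exp (E r)) has_real_derivative exp (E r) * (- (r^2) - x/2)) (at r)"
      using DERIV_chain2[OF DERIV_exp i1] .
    have d2: "((\<lambda>r. sin (T r)) has_real_derivative cos (T r) * (- (sqrt 3 / 2 * x))) (at r)"
      using DERIV_chain2[OF DERIV_sin i2] .
    have d4: "((\<lambda>r. exp (E r) * sin (T r)) has_real_derivative
       exp (E r) * (- (r^2) - x/2) * sin (T r) + exp (E r) * (cos (T r) * (- (sqrt 3 / 2 * x)))) (at r)"
      using DERIV_mult[OF d1 d2] by (simp add: mult.commute)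
    have f: "G = (\<lambda>r. exp (E r) * sin (T r))"
      by (rule ext) (simp add: G_def PP_def E_def T_def mult_ac)
    have s1: "sin (pi - sqrt 3 / 2 * x * r) = - sin (T r)" by (simp add: T_def mult_ac)
    have s2: "sin (pi/3 - sqrt 3 / 2 * x * r) = sqrt 3 / 2 * cos (T r) + sin (T r) / 2"
      by (simp add: T_def sin_diff sin_60 cos_60 mult_ac)
    have "g' r = exp (E r) * (- (r^2) - x/2) * sin (T r) + exp (E r) * (cos (T r) * (- (sqrt 3 / 2 * x)))"
      unfolding g'_def PP_def s1 s2 by (simp add: E_def algebra_simps)
    then show ?thesis unfolding f using d4 by simp
  qed
  obtain C2 where C2: "\<And>r. r \<ge> 0 \<Longrightarrow> \<bar>PP 2 pi x r\<bar> \<le> C2 * exp (-r)"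
    using PP_bound_ex[of "\<bar>x\<bar>" 2 pi] by auto
  obtain C0 where C0: "\<And>r. r \<ge> 0 \<Longrightarrow> \<bar>PP 0 (pi/3) x r\<bar> \<le> C0 * exp (-r)"
    using PP_bound_ex[of "\<bar>x\<bar>" 0 "pi/3"] by auto
  obtain CG where CG: "\<And>r. r \<ge> 0 \<Longrightarrow> \<bar>PP 0 0 x r\<bar> \<le> CG * exp (-r)"
    using PP_bound_ex[of "\<bar>x\<bar>" 0 0] by auto
  define Cg where "Cg = C2 + \<bar>x\<bar> * C0"
  have g'b: "\<bar>g' r\<bar> \<le> Cg * exp (-r)" if "r \<ge> 0" for r
  proof -
    have "\<bar>g' r\<bar> \<le> \<bar>PP 2 pi x r\<bar> + \<bar>x\<bar> * \<bar>PP 0 (pi/3) x r\<bar>"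
      unfolding g'_def by (simp add: abs_mult[symmetric] abs_triangle_ineq4)
    also have "\<dots> \<le> C2 * exp (-r) + \<bar>x\<bar> * (C0 * exp (-r))"
      using C2[OF that] C0[OF that] by (intro add_mono mult_left_mono) auto
    finally show ?thesis by (simp add: Cg_def algebra_simps)
  qed
  have g'c: "continuous_on A g'" for A
    unfolding g'_def by (intro continuous_intros PP_cont_r)
  have G0: "G 0 = 0" by (simp add: G_def PP_def)
  have Int_n: "integral {0..real n} g' = G (real n)" for n :: nat
  proof -
    have "(g' has_integral G (real n) - G 0) {0..real n}"
    proof (rule fundamental_theorem_of_calculus)
      show "0 \<le> real n" by simp
      show "\<And>r. r \<in> {0..real n} \<Longrightarrow> (G has_vector_derivative g' r) (at r within {0..real n})"
        using dG by (auto simp: has_real_derivative_iff_has_vector_derivative[symmetric] intro: has_field_derivative_at_within)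
    qed
    then show ?thesis using G0 by (simp add: integral_unique)
  qed
  define v where "v = integral {0..} g'"
  have vb: "\<bar>v\<bar> \<le> (Cg + CG) * exp (- real n)" for n :: nat
  proof -
    have "\<bar>v - G (real n)\<bar> \<le> Cg * exp (- real n)"
      unfolding v_def Int_n[symmetric] by (rule exp_tail_bound[OF g'c g'b]) auto
    moreover have "\<bar>G (real n)\<bar> \<le> CG * exp (- real n)" using CG[of "real n"] by (simp add: G_def)
    ultimately show ?thesis by (simp add: algebra_simps)
  qed
  have lim0: "(\<lambda>n. (Cg + CG) * exp (- real n)) \<longlonglongrightarrow> 0"
  proof -
    have "(\<lambda>n. exp (- real n)) \<longlonglongrightarrow> 0"
      using filterlim_compose[OF exp_at_bot filterlim_uminus_at_bot_at_top[THEN filterlim_compose, OF filterlim_real_sequentially]]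
      by simp
    then show ?thesis using tendsto_mult_right_zero by blast
  qed
  have "\<bar>v\<bar> \<le> 0" by (rule LIMSEQ_le_const[OF lim0]) (use vb in auto)
  then have v0: "v = 0" by simp
  have "v = II 2 pi x - x * II 0 (pi/3) x"
  proof -
    have "(\<lambda>r. x * PP 0 (pi / 3) x r) integrable_on {0..}"
      using integrable_on_cmult_left[OF PP_integrable[of 0 "pi/3" x], of x] by simp
    then show ?thesis unfolding v_def g'_def II_def
      by (subst integral_diff) (auto intro!: PP_integrable simp: integral_mult_right)
  qed
  then show ?thesis using v0 by simp
qed

definition Aint :: "real \<Rightarrow> real" where "Aint x = II 0 (pi/3) x / pi"
definition Aintp :: "real \<Rightarrow> real" where "Aintp x = - II 1 (2*pi/3) x / pi"

lemma airy_sol_Aint: "airy_sol Aint Aintp"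
proof -
  have a: "pi/3 + pi/3 = 2*pi/3" "2*pi/3 + pi/3 = pi" by simp_all
  have "(Aint has_real_derivative Aintp x) (at x)" for x
    unfolding Aint_def Aintp_def using DERIV_cdivide[OF II_deriv[of 0 "pi/3" x], of pi]
    by (simp add: a One_nat_def)
  moreover have "(Aintp has_real_derivative x * Aint x) (at x)" for x
  proof -
    have e: "Suc 1 = (2::nat)" by simp
    from II_deriv[of 1 "2*pi/3" x] have "(II 1 (2*pi/3) has_real_derivative - II 2 pi x) (at x)"
      unfolding e a(2) .
    from DERIV_cdivide[OF DERIV_minus[OF this], of pi]
    have "((\<lambda>x. - II 1 (2*pi/3) x / pi) has_real_derivative - (- II 2 pi x) / pi) (at x)" by simp
    then show ?thesis unfolding Aint_def Aintp_def by (simp add: ode_identity)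
  qed
  ultimately show ?thesis by (simp add: airy_sol_def)
qed

lemma exp_seq0: "(\<lambda>n. K * exp (- real n)) \<longlonglongrightarrow> 0"
proof -
  have "(\<lambda>n. exp (- real n)) \<longlonglongrightarrow> 0"
    using filterlim_compose[OF exp_at_bot filterlim_uminus_at_bot_at_top[THEN filterlim_compose, OF filterlim_real_sequentially]]
    by simp
  then show ?thesis using tendsto_mult_right_zero by blast
qed

lemma gamma_int:
  "integral {0..} (\<lambda>r. r ^ k * exp (-(r^3/3))) = 3 powr ((real k - 2)/3) * Gamma ((real k + 1)/3)"
proof -
  define f where "f = (\<lambda>r::real. r ^ k * exp (-(r^3/3)))"
  define g where "g = (\<lambda>t::real. (3*t) powr (1/3))"
  define g' where "g' = (\<lambda>t::real. (3*t) powr (-2/3))"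
  define a where "a = (real k + 1)/3"
  define c where "c = (3::real) powr ((real k - 2)/3)"
  define h where "h = (\<lambda>t. t powr (a - 1) / exp t)"
  define b where "b = (\<lambda>n::nat. (real n)^3/3)"
  have a0: "a > 0" by (simp add: a_def)
  have c0: "c > 0" by (simp add: c_def)
  have hG: "(h has_integral Gamma a) {0..}" unfolding h_def using Gamma_integral_real[OF a0] .
  have hnn: "h t \<ge> 0" for t by (simp add: h_def)
  have gb: "g (b n) = real n" for n
  proof (cases "n = 0")
    case True then show ?thesis by (simp add: g_def b_def)
  next
    case False
    then have "real n > 0" by simp
    then have e: "(real n)^3 = real n powr 3" by (simp add: powr_realpow)
    have "g (b n) = ((real n)^3) powr (1/3)" by (simp add: g_def b_def)
    also have "\<dots> = (real n powr 3) powr (1/3)" by (simp only: e)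
    also have "\<dots> = real n" by (simp only: powr_powr) simp
    finally show ?thesis .
  qed
  have g0: "g 0 = 0" by (simp add: g_def)
  have pw: "g' t * f (g t) = c * h t" if t: "t \<ge> 0" for t
  proof (cases "t = 0")
    case True then show ?thesis by (simp add: g'_def h_def)
  next
    case False
    then have t0: "3*t > 0" using t by simp
    have g3: "(g t)^3 = 3*t"
      using t0 by (simp add: g_def powr_power)
    have gk: "(g t)^k = (3*t) powr (real k/3)"
      using t0 by (simp add: g_def powr_power)
    have "g' t * f (g t) = (3*t) powr (-2/3) * (3*t) powr (real k/3) * exp (-t)"
      by (simp add: f_def g'_def gk g3)
    also have "\<dots> = (3*t) powr ((real k - 2)/3) * exp (-t)"
      by (simp add: powr_add[symmetric] diff_divide_distrib add.commute)
    also have "\<dots> = c * (t powr (a - 1) / exp t)"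
      by (simp add: powr_mult c_def a_def exp_minus field_simps)
    finally show ?thesis by (simp add: h_def)
  qed
  have sub: "((\<lambda>t. c * h t) has_integral integral {0..real n} f) {0..b n}" for n
  proof -
    have "((\<lambda>t. g' t *\<^sub>R f (g t)) has_integral integral {g 0..g (b n)} f) {0..b n}"
    proof (rule has_integral_substitution_strong[of "{0}" 0 "b n" g 0 "real n" f g'])
      show "finite {0::real}" by simp
      show "0 \<le> b n" by (simp add: b_def)
      show "g 0 \<le> g (b n)" using gb g0 by simp
      show "g ` {0..b n} \<subseteq> {0..real n}"
      proof
        fix y assume "y \<in> g ` {0..b n}"
        then obtain t where t: "t \<in> {0..b n}" "y = g t" by blast
        have "g t \<le> g (b n)" unfolding g_def using t by (intro powr_mono2) auto
        then show "y \<in> {0..real n}" using t gb by (auto simp: g_def)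
      qed
      show "continuous_on {0..real n} f" unfolding f_def by (intro continuous_intros) auto
      show "continuous_on {0..b n} g" unfolding g_def
        by (intro continuous_on_powr' continuous_intros) auto
      fix t assume t: "t \<in> {0..b n} - {0}"
      then have t0: "3*t > 0" by auto
      have "((\<lambda>t. (3*t) powr (1/3)) has_real_derivative ((1/3) * (3*t) powr (1/3 - 1)) * 3) (at t)"
        using DERIV_chain2[OF has_real_derivative_powr[OF t0, of "1/3"] DERIV_cmult_Id[of 3 t]] .
      then show "(g has_real_derivative g' t) (at t within {0..b n})"
        unfolding g_def g'_def by (auto intro: has_field_derivative_at_within)
    qed
    then have "((\<lambda>t. g' t * f (g t)) has_integral integral {0..real n} f) {0..b n}"
      using gb g0 by simp
    then show ?thesis by (rule has_integral_eq[rotated]) (use pw in auto)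
  qed
  define fk where "fk = (\<lambda>n t. if t \<in> {0..b n} then c * h t else 0)"
  have chG: "((\<lambda>t. c * h t) has_integral c * Gamma a) {0..}"
    using has_integral_mult_right[OF hG, of c] .
  have dc: "(\<lambda>n. integral {0..} (fk n)) \<longlonglongrightarrow> integral {0..} (\<lambda>t. c * h t)"
  proof (rule dominated_convergence(2))
    show "fk n integrable_on {0..}" for n
    proof -
      have "{0..b n} \<inter> {0..} = {0..b n}" by auto
      then show ?thesis unfolding fk_def integrable_restrict_Int
        using has_integral_integrable[OF sub[of n]] by simp
    qed
    show "(\<lambda>t. c * h t) integrable_on {0..}" using chG by blast
    show "norm (fk n t) \<le> c * h t" if "t \<in> {0..}" for n t
      using c0 hnn[of t] by (auto simp: fk_def)
    show "(\<lambda>n. fk n t) \<longlonglongrightarrow> c * h t" if t: "t \<in> {0..}" for t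
    proof (rule Lim_transform_eventually[OF tendsto_const])
      obtain N :: nat where N: "real N \<ge> 3*t + 1" using real_arch_simple by blast
      show "\<forall>\<^sub>F n in sequentially. c * h t = fk n t"
        unfolding eventually_sequentially
      proof (intro exI allI impI)
        fix n assume n: "N \<le> n"
        then have n1: "real n \<ge> 3*t + 1" using N by linarith
        then have "real n \<ge> 1" using t by simp
        then have "(real n)^2 \<ge> 1" by (simp add: one_le_power)
        then have "real n * (real n)^2 \<ge> real n * 1" using \<open>real n \<ge> 1\<close> by (intro mult_left_mono) auto
        then have "(real n)^3 \<ge> real n" by (simp add: power3_eq_cube power2_eq_square)
        then have "b n \<ge> t" using n1 unfolding b_def by linarith
        then show "c * h t = fk n t" using t by (simp add: fk_def)
      qed
    qed
  qed
  have fkint: "integral {0..} (fk n) = integral {0..real n} f" for n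
  proof -
    have "integral {0..} (fk n) = integral ({0..b n} \<inter> {0..}) (\<lambda>t. c * h t)"
      unfolding fk_def by (rule integral_restrict_Int)
    also have "{0..b n} \<inter> {0..} = {0..b n}" by auto
    finally have "integral {0..} (fk n) = integral {0..b n} (\<lambda>t. c * h t)" .
    also have "\<dots> = integral {0..real n} f" using sub[of n] by (rule integral_unique)
    finally show ?thesis .
  qed
  have lim1: "(\<lambda>n. integral {0..real n} f) \<longlonglongrightarrow> c * Gamma a"
  proof -
    have "integral {0..} (\<lambda>t. c * h t) = c * Gamma a" using chG by (rule integral_unique)
    moreover have "(\<lambda>n. integral {0..} (fk n)) = (\<lambda>n. integral {0..real n} f)"
      by (rule ext) (rule fkint)
    ultimately show ?thesis using dc by metis
  qed
  have fb: "\<bar>f r\<bar> \<le> fact k * exp (3 * (\<bar>0\<bar>+2)^2) * exp (-r)" if "r \<ge> 0" for r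
    using main_bound[of 0 0 r k] that by (simp add: f_def)
  have fc: "continuous_on {0..} f" unfolding f_def by (intro continuous_intros) auto
  have lim2: "(\<lambda>n. integral {0..real n} f) \<longlonglongrightarrow> integral {0..} f"
  proof -
    have "(\<lambda>n. integral {0..real n} f - integral {0..} f) \<longlonglongrightarrow> 0"
      by (rule Lim_null_comparison[OF _ exp_seq0[of "fact k * exp (3 * (\<bar>0\<bar>+2)^2)"]])
         (use exp_tail_bound[OF fc fb] in \<open>auto simp: abs_minus_commute\<close>)
    then show ?thesis by (simp add: LIM_zero_iff)
  qed
  have "integral {0..} f = c * Gamma a" using LIMSEQ_unique[OF lim2 lim1] .
  then show ?thesis by (simp add: f_def c_def a_def)
qed

lemma gamma_refl: "Gamma (1/3::real) * Gamma (2/3) = 2 * pi / sqrt 3"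
proof -
  define z where "z = complex_of_real (1/3)"
  have R: "Gamma z * Gamma (1 - z) = of_real pi / sin (of_real pi * z)"
    by (rule Gamma_reflection_complex)
  have e1: "1 - z = complex_of_real (2/3)" by (simp add: z_def)
  have e2: "of_real pi * z = complex_of_real (pi/3)" by (simp add: z_def)
  have g1: "Gamma z = complex_of_real (Gamma (1/3))" unfolding z_def by (rule Gamma_complex_of_real)
  have g2: "Gamma (1 - z) = complex_of_real (Gamma (2/3))" unfolding e1 by (rule Gamma_complex_of_real)
  have s3: "sin (of_real pi * z) = complex_of_real (sin (pi/3))" unfolding e2 by (rule sin_of_real)
  have "complex_of_real (Gamma (1/3) * Gamma (2/3)) = complex_of_real (pi / sin (pi/3))"
    using R unfolding g1 g2 s3 of_real_mult[symmetric] of_real_divide[symmetric] .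
  then have "Gamma (1/3::real) * Gamma (2/3) = pi / sin (pi/3)" by (simp only: of_real_eq_iff)
  also have "\<dots> = 2 * pi / sqrt 3" by (simp add: sin_60)
  finally show ?thesis .
qed

lemma G0_eq: "integral {0..} (\<lambda>r::real. exp (-(r^3/3))) = 3 powr (-2/3) * Gamma (1/3)"
  using gamma_int[of 0] by simp

lemma G1_eq: "integral {0..} (\<lambda>r::real. r * exp (-(r^3/3))) = 3 powr (-1/3) * Gamma (2/3)"
  using gamma_int[of 1] by simp

lemma Aint_0: "Aint 0 = C1"
proof -
  have e: "PP 0 (pi/3) 0 = (\<lambda>r. sqrt 3 / 2 * exp (-(r^3/3)))"
    by (rule ext) (simp add: PP_def sin_60)
  have "Aint 0 = sqrt 3 / 2 * (3 powr (-2/3) * Gamma (1/3)) / pi"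
    unfolding Aint_def II_def e by (simp add: integral_mult_right G0_eq)
  moreover have "Gamma (1/3::real) = 2 * pi / (sqrt 3 * Gamma (2/3))"
  proof -
    have g2: "Gamma (2/3::real) > 0" by simp
    have "Gamma (2/3::real) \<noteq> 0" using g2 by linarith
    then have "Gamma (1/3::real) = (Gamma (1/3) * Gamma (2/3)) / Gamma (2/3)" by simp
    also have "\<dots> = 2 * pi / sqrt 3 / Gamma (2/3)" by (simp only: gamma_refl)
    finally show ?thesis by simp
  qed
  ultimately have "Aint 0 = 3 powr (-2/3) / Gamma (2/3)"
    by (simp add: field_simps)
  then show ?thesis by (simp add: C1_def powr_minus field_simps)
qed

lemma sin_2pi3: "sin (2*pi/3) = sqrt 3 / 2"
proof -
  have "2*pi/3 = pi - pi/3" by simp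
  then show ?thesis by (simp only: sin_pi_minus sin_60)
qed

lemma Aintp_0: "Aintp 0 = - C2"
proof -
  have e: "PP 1 (2*pi/3) 0 = (\<lambda>r. sqrt 3 / 2 * (r * exp (-(r^3/3))))"
    by (rule ext) (simp add: PP_def sin_2pi3)
  have "Aintp 0 = - (sqrt 3 / 2 * (3 powr (-1/3) * Gamma (2/3))) / pi"
    unfolding Aintp_def II_def e by (simp add: integral_mult_right G1_eq)
  moreover have "Gamma (2/3::real) = 2 * pi / (sqrt 3 * Gamma (1/3))"
  proof -
    have g1: "Gamma (1/3::real) > 0" by simp
    have "Gamma (1/3::real) \<noteq> 0" using g1 by linarith
    then have "Gamma (2/3::real) = (Gamma (1/3) * Gamma (2/3)) / Gamma (1/3)" by simp
    also have "\<dots> = 2 * pi / sqrt 3 / Gamma (1/3)" by (simp only: gamma_refl)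
    finally show ?thesis by simp
  qed
  ultimately have "Aintp 0 = - (3 powr (-1/3) / Gamma (1/3))"
    by (simp add: field_simps)
  then show ?thesis by (simp add: C2_def powr_minus field_simps)
qed

lemma Ai_eq_Aint: "Airy_Ai x = Aint x"
proof -
  have "Airy_Ai x - Aint x = 0"
    by (rule airy_unique[OF airy_sol_diff[OF airy_sol_Ai airy_sol_Aint], of 0])
       (simp_all add: Ai_0 Aint_0 Aip_0 Aintp_0)
  then show ?thesis by simp
qed

definition Bnd :: real where "Bnd = integral {0..} (\<lambda>r. exp (-(r^3/3))) / pi"

lemma Ai_bounded: "x \<ge> 0 \<Longrightarrow> \<bar>Airy_Ai x\<bar> \<le> Bnd"
proof -
  assume x: "x \<ge> 0"
  have e: "(\<lambda>r::real. exp (-(r^3/3))) = PP 0 (pi/2) 0" by (rule ext) (simp add: PP_def)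
  have bd: "norm (PP 0 (pi/3) x r) \<le> exp (-(r^3/3))" if r: "r \<in> {0..}" for r
  proof -
    have "\<bar>PP 0 (pi/3) x r\<bar> = exp (-(r^3/3) - x*r/2) * \<bar>sin (pi/3 - sqrt 3 / 2 * x * r)\<bar>"
      by (simp add: PP_def abs_mult)
    also have "\<dots> \<le> exp (-(r^3/3) - x*r/2) * 1" by (intro mult_left_mono) auto
    also have "\<dots> \<le> exp (-(r^3/3))" using x r by simp
    finally show ?thesis by simp
  qed
  have i2: "(\<lambda>r::real. exp (-(r^3/3))) integrable_on {0..}" unfolding e by (rule PP_integrable)
  have "norm (II 0 (pi/3) x) \<le> integral {0..} (\<lambda>r. exp (-(r^3/3)))"
    unfolding II_def by (rule integral_norm_bound_integral[OF PP_integrable i2 bd])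
  then have "\<bar>II 0 (pi/3) x\<bar> \<le> integral {0..} (\<lambda>r. exp (-(r^3/3)))" by simp
  then show ?thesis unfolding Ai_eq_Aint Aint_def Bnd_def by (simp add: divide_right_mono)
qed

lemma Ai_pos_right: "x \<ge> 0 \<Longrightarrow> Airy_Ai x > 0 \<and> Aip x < 0"
  by (rule bounded_pos[OF airy_sol_Ai Ai_bounded]) (use C1_pos C2_pos Ai_0 Aip_0 in auto)

lemma Ai_riccati: "t \<ge> 0 \<Longrightarrow> t * (Airy_Ai t)^2 - (Aip t)^2 < 0"
  by (rule riccati_neg[OF airy_sol_Ai]) (use Ai_pos_right in auto)

lemma a1_props: "Airy_Ai airy_a1 = 0" "\<And>x. Airy_Ai x = 0 \<Longrightarrow> x \<le> airy_a1" "airy_a1 < 0"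
proof -
  define Z where "Z = {x. Airy_Ai x = 0}"
  obtain s where s: "s \<in> {-1-pi..-1-pi+pi}" "Airy_Ai s = 0"
    using sturm_zero[OF airy_sol_Ai, of "-1-pi"] by auto
  have ne: "Z \<noteq> {}" using s by (auto simp: Z_def)
  have neg: "z < 0" if "z \<in> Z" for z
    using that Ai_pos_right[of z] by (force simp: Z_def)
  have bdd: "bdd_above Z" unfolding bdd_above_def using neg by (auto intro!: exI[of _ 0] less_imp_le)
  have cl: "closed Z"
  proof -
    have "continuous_on UNIV Airy_Ai" by (rule airy_sol_cont[OF airy_sol_Ai])
    then show ?thesis unfolding Z_def by (rule closed_Collect_eq[OF _ continuous_on_const])
  qed
  have SZ: "Sup Z \<in> Z" by (rule closed_contains_Sup[OF ne bdd cl])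
  have up: "y \<le> Sup Z" if "Airy_Ai y = 0" for y
    using that bdd by (auto simp: Z_def intro: cSup_upper)
  have "airy_a1 = Sup Z"
    unfolding airy_a1_def by (rule Greatest_equality) (use SZ up in \<open>auto simp: Z_def\<close>)
  then show "Airy_Ai airy_a1 = 0" "\<And>x. Airy_Ai x = 0 \<Longrightarrow> x \<le> airy_a1" "airy_a1 < 0"
    using SZ up neg by (auto simp: Z_def)
qed

lemma Ai_pos_after_a1: "x > airy_a1 \<Longrightarrow> Airy_Ai x > 0"
proof -
  assume x: "x > airy_a1"
  show ?thesis
  proof (cases "x \<ge> 0")
    case True then show ?thesis using Ai_pos_right by blast
  next
    case False
    have nz: "Airy_Ai x \<noteq> 0" using a1_props(2)[of x] x by auto
    show ?thesis
    proof (rule ccontr)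
      assume "\<not> ?thesis"
      then have "Airy_Ai x < 0" using nz by simp
      then obtain t where t: "x \<le> t" "t \<le> 0" "Airy_Ai t = 0"
        using IVT'[of Airy_Ai x 0 0] Ai_0 C1_pos False airy_sol_cont[OF airy_sol_Ai] by force
      then show False using a1_props(2)[of t] x by auto
    qed
  qed
qed

lemma Aip_a1: "Aip airy_a1 \<noteq> 0"
proof
  assume "Aip airy_a1 = 0"
  then have "Airy_Ai 0 = 0" using airy_unique[OF airy_sol_Ai a1_props(1)] by blast
  then show False using Ai_0 C1_pos by simp
qed

lemma re_deriv:
  fixes G :: "complex \<Rightarrow> complex" and g :: "real \<Rightarrow> real"
  assumes T: "open T" and G: "G holomorphic_on T"
    and eq: "\<And>x. complex_of_real x \<in> T \<Longrightarrow> g x = Re (G (complex_of_real x))"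
    and x: "complex_of_real x \<in> T"
  shows "(g has_real_derivative Re (deriv G (complex_of_real x))) (at x)"
proof -
  have dG: "(G has_field_derivative deriv G (complex_of_real x)) (at (complex_of_real x))"
    using holomorphic_derivI[OF G T x] .
  have "((\<lambda>t. G (complex_of_real t)) has_vector_derivative deriv G (complex_of_real x)) (at x)"
    using has_vector_derivative_real_field[OF dG] .
  from bounded_linear.has_vector_derivative[OF bounded_linear_Re this]
  have "((\<lambda>t. Re (G (complex_of_real t))) has_real_derivative Re (deriv G (complex_of_real x))) (at x)"
    by (simp add: has_real_derivative_iff_has_vector_derivative)
  moreover have "open {t. complex_of_real t \<in> T}"
  proof -
    have "open (complex_of_real -` T)" by (rule open_vimage[OF T]) (intro continuous_intros)
    then show ?thesis by (simp add: vimage_def)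
  qed
  ultimately show ?thesis
    using has_field_derivative_transform_within_open[of "\<lambda>t. Re (G (complex_of_real t))" _ x
        "{t. complex_of_real t \<in> T}" g] x eq by auto
qed

lemma smooth_from_holo:
  fixes F :: "complex \<Rightarrow> complex" and f :: "real \<Rightarrow> real"
  assumes T: "open T" and F: "F holomorphic_on T"
    and eq: "\<And>x. complex_of_real x \<in> T \<Longrightarrow> f x = Re (F (complex_of_real x))"
  shows "\<And>x. complex_of_real x \<in> T \<Longrightarrow> (deriv ^^ n) f x = Re ((deriv ^^ n) F (complex_of_real x))
            \<and> ((deriv ^^ n) f) differentiable (at x)"
proof (induction n)
  case 0
  have "(f has_real_derivative Re (deriv F (complex_of_real x))) (at x)"
    by (rule re_deriv[OF T F eq 0])
  then show ?case using eq[OF 0] by (auto simp: real_differentiable_def)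
next
  case (Suc n)
  have Hn: "(deriv ^^ n) F holomorphic_on T" by (rule holomorphic_higher_deriv[OF F T])
  have eqn: "\<And>y. complex_of_real y \<in> T \<Longrightarrow> (deriv ^^ n) f y = Re ((deriv ^^ n) F (complex_of_real y))"
    using Suc.IH by blast
  have D: "((deriv ^^ n) f has_real_derivative Re (deriv ((deriv ^^ n) F) (complex_of_real x))) (at x)"
    by (rule re_deriv[OF T Hn eqn Suc.prems])
  have val: "(deriv ^^ Suc n) f x = Re ((deriv ^^ Suc n) F (complex_of_real x))"
    using DERIV_imp_deriv[OF D] by simp
  have HSn: "(deriv ^^ Suc n) F holomorphic_on T" by (rule holomorphic_higher_deriv[OF F T])
  have eqSn: "\<And>y. complex_of_real y \<in> T \<Longrightarrow> (deriv ^^ Suc n) f y = Re ((deriv ^^ Suc n) F (complex_of_real y))"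
  proof -
    fix y assume y: "complex_of_real y \<in> T"
    have "((deriv ^^ n) f has_real_derivative Re (deriv ((deriv ^^ n) F) (complex_of_real y))) (at y)"
      by (rule re_deriv[OF T Hn eqn y])
    then show "(deriv ^^ Suc n) f y = Re ((deriv ^^ Suc n) F (complex_of_real y))"
      using DERIV_imp_deriv by simp
  qed
  have "((deriv ^^ Suc n) f has_real_derivative Re (deriv ((deriv ^^ Suc n) F) (complex_of_real x))) (at x)"
    by (rule re_deriv[OF T HSn eqSn Suc.prems])
  then show ?case using val by (auto simp: real_differentiable_def)
qed

lemma AiS_holo: "(AiS :: complex \<Rightarrow> complex) holomorphic_on A"
  unfolding holomorphic_on_def field_differentiable_def
  using AiS_deriv has_field_derivative_at_within by blast

lemma AiSp_holo: "(AiSp :: complex \<Rightarrow> complex) holomorphic_on A"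
  unfolding holomorphic_on_def field_differentiable_def
  using AiSp_deriv has_field_derivative_at_within by blast

lemma AiS_cont: "continuous_on A (AiS :: complex \<Rightarrow> complex)"
  using holomorphic_on_imp_continuous_on[OF AiS_holo] .

lemma AiSp_cont: "continuous_on A (AiSp :: complex \<Rightarrow> complex)"
  using holomorphic_on_imp_continuous_on[OF AiSp_holo] .

definition TT :: "complex set" where
  "TT = {z. AiS (complex_of_real airy_a1 + z) \<noteq> 0}"

lemma TT_open: "open TT"
proof -
  have "continuous_on UNIV (\<lambda>z. AiS (complex_of_real airy_a1 + z))"
    by (rule continuous_on_compose2[OF AiS_cont[of UNIV]]) (auto intro!: continuous_intros)
  then show ?thesis unfolding TT_def by (rule open_Collect_neq[OF _ continuous_on_const])
qed

lemma TT_pos: "x > 0 \<Longrightarrow> complex_of_real x \<in> TT"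
proof -
  assume "x > 0"
  then have "Airy_Ai (airy_a1 + x) > 0" by (intro Ai_pos_after_a1) simp
  moreover have "complex_of_real airy_a1 + complex_of_real x = complex_of_real (airy_a1 + x)" by simp
  ultimately show ?thesis unfolding TT_def by (simp only: mem_Collect_eq AiS_complex) simp
qed

lemma holo_comp:
  "(\<lambda>z. AiS (c + z)) holomorphic_on A"
  "(\<lambda>z. AiSp (c + z)) holomorphic_on A" for c :: complex
proof -
  have d: "((\<lambda>z. c + z) has_field_derivative 0 + 1) (at z)" for z :: complex
    by (rule DERIV_add[OF DERIV_const DERIV_ident])
  show "(\<lambda>z. AiS (c + z)) holomorphic_on A"
    unfolding holomorphic_on_def field_differentiable_def
    using DERIV_chain2[OF AiS_deriv d] has_field_derivative_at_within by blast
  show "(\<lambda>z. AiSp (c + z)) holomorphic_on A"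
    unfolding holomorphic_on_def field_differentiable_def
    using DERIV_chain2[OF AiSp_deriv d] has_field_derivative_at_within by blast
qed
lemma Psi_holo: "(\<lambda>z. AiSp (complex_of_real airy_a1 + z) / AiS (complex_of_real airy_a1 + z)) holomorphic_on TT"
  by (rule holomorphic_on_divide[OF holo_comp(2) holo_comp(1)]) (auto simp: TT_def)
lemma Phi_holo: "(\<lambda>z. z * AiSp (complex_of_real airy_a1 + z) / AiS (complex_of_real airy_a1 + z)) holomorphic_on TT"
  by (rule holomorphic_on_divide[OF holomorphic_on_mult[OF holomorphic_on_ident holo_comp(2)] holo_comp(1)])
     (auto simp: TT_def)
lemma Psi_smooth:
  fixes \<Psi> :: "real \<Rightarrow> real"
  assumes "\<Psi> = (\<lambda>x. deriv Airy_Ai (airy_a1 + x) / Airy_Ai (airy_a1 + x))"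
  shows "\<forall>n. \<forall>x>0. ((deriv ^^ n) \<Psi>) differentiable (at x)"
proof (intro allI impI)
  fix n :: nat and x :: real assume x: "x > 0"
  have eq: "\<Psi> y = Re (AiSp (complex_of_real airy_a1 + complex_of_real y) / AiS (complex_of_real airy_a1 + complex_of_real y))" for y
  proof -
    have a: "complex_of_real airy_a1 + complex_of_real y = complex_of_real (airy_a1 + y)" by simp
    show ?thesis unfolding assms deriv_Ai a AiS_complex AiSp_complex of_real_divide[symmetric] Re_complex_of_real ..
  qed
  show "((deriv ^^ n) \<Psi>) differentiable (at x)"
    using smooth_from_holo[OF TT_open Psi_holo eq TT_pos[OF x]] by blast
qed

lemma Phi_smooth:
  fixes \<Phi> :: "real \<Rightarrow> real"
  assumes "\<Phi> = (\<lambda>x. x * deriv Airy_Ai (airy_a1 + x) / Airy_Ai (airy_a1 + x))"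
  shows "\<forall>n. \<forall>x>0. ((deriv ^^ n) \<Phi>) differentiable (at x)"
proof (intro allI impI)
  fix n :: nat and x :: real assume x: "x > 0"
  have eq: "\<Phi> y = Re (complex_of_real y * AiSp (complex_of_real airy_a1 + complex_of_real y) / AiS (complex_of_real airy_a1 + complex_of_real y))" for y
  proof -
    have a: "complex_of_real airy_a1 + complex_of_real y = complex_of_real (airy_a1 + y)" by simp
    show ?thesis unfolding assms deriv_Ai a AiS_complex AiSp_complex of_real_mult[symmetric] of_real_divide[symmetric] Re_complex_of_real ..
  qed
  show "((deriv ^^ n) \<Phi>) differentiable (at x)"
    using smooth_from_holo[OF TT_open Phi_holo eq TT_pos[OF x]] by blast
qed

lemma chainA: "((\<lambda>s. Airy_Ai (airy_a1 + s)) has_real_derivative Aip (airy_a1 + s)) (at s)"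
  using DERIV_chain2[OF Ai_deriv DERIV_add[OF DERIV_const DERIV_ident]] by simp

lemma chainAp: "((\<lambda>s. Aip (airy_a1 + s)) has_real_derivative (airy_a1 + s) * Airy_Ai (airy_a1 + s)) (at s)"
  using DERIV_chain2[OF Aip_deriv DERIV_add[OF DERIV_const DERIV_ident]] by simp

lemma m_neg: "t > airy_a1 \<Longrightarrow> t * (Airy_Ai t)^2 - (Aip t)^2 < 0"
proof -
  assume t: "t > airy_a1"
  show ?thesis
  proof (cases "t \<ge> 0")
    case True then show ?thesis by (rule Ai_riccati)
  next
    case False
    have "Airy_Ai t > 0" by (rule Ai_pos_after_a1[OF t])
    then have "t * (Airy_Ai t)^2 < 0" using False by (simp add: mult_neg_pos)
    moreover have "(Aip t)^2 \<ge> 0" by simp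
    ultimately show ?thesis by linarith
  qed
qed

lemma Psi_mono:
  assumes "0 < x" "x < y"
  shows "Aip (airy_a1 + y) / Airy_Ai (airy_a1 + y) < Aip (airy_a1 + x) / Airy_Ai (airy_a1 + x)"
proof (rule DERIV_neg_imp_decreasing[OF assms(2), where f = "\<lambda>s. Aip (airy_a1 + s) / Airy_Ai (airy_a1 + s)"])
  fix s assume s: "x \<le> s" "s \<le> y"
  define t where "t = airy_a1 + s"
  have tp: "t > airy_a1" using s assms by (simp add: t_def)
  have A: "Airy_Ai t > 0" by (rule Ai_pos_after_a1[OF tp])
  have D: "((\<lambda>s. Aip (airy_a1 + s) / Airy_Ai (airy_a1 + s)) has_real_derivative
      (t * Airy_Ai t * Airy_Ai t - Aip t * Aip t) / (Airy_Ai t * Airy_Ai t)) (at s)"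
    using DERIV_divide[OF chainAp chainA] A by (simp add: t_def)
  have "(t * Airy_Ai t * Airy_Ai t - Aip t * Aip t) / (Airy_Ai t * Airy_Ai t) < 0"
    using m_neg[OF tp] A by (simp add: power2_eq_square divide_neg_pos)
  then show "\<exists>d. ((\<lambda>s. Aip (airy_a1 + s) / Airy_Ai (airy_a1 + s)) has_real_derivative d) (at s) \<and> d < 0"
    using D by blast
qed

definition KK :: "real \<Rightarrow> real" where
  "KK s = s * (airy_a1 + s) * (Airy_Ai (airy_a1 + s))^2 + Airy_Ai (airy_a1 + s) * Aip (airy_a1 + s)
          - s * (Aip (airy_a1 + s))^2"

lemma KK_deriv: "(KK has_real_derivative (Airy_Ai (airy_a1 + s))^2 * (2 * airy_a1 + 3 * s)) (at s)"
proof -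
  define A where "A = (\<lambda>s. Airy_Ai (airy_a1 + s))"
  define P where "P = (\<lambda>s. Aip (airy_a1 + s))"
  have dA: "(A has_real_derivative P s) (at s)" unfolding A_def P_def by (rule chainA)
  have dP: "(P has_real_derivative (airy_a1 + s) * A s) (at s)" unfolding A_def P_def by (rule chainAp)
  have dt: "((\<lambda>s. airy_a1 + s) has_real_derivative 0 + 1) (at s)" by (rule DERIV_add[OF DERIV_const DERIV_ident])
  have dI: "((\<lambda>s. s) has_real_derivative 1) (at s)" by (rule DERIV_ident)
  note d1 = DERIV_mult[OF DERIV_mult[OF DERIV_mult[OF dI dt] dA] dA]
  note d2 = DERIV_mult[OF dA dP]
  note d3 = DERIV_mult[OF DERIV_mult[OF dI dP] dP]
  have f: "KK = (\<lambda>s. s * (airy_a1 + s) * A s * A s + A s * P s - s * P s * P s)"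
    by (rule ext) (simp add: KK_def A_def P_def power2_eq_square algebra_simps)
  show ?thesis unfolding f
    using DERIV_diff[OF DERIV_add[OF d1 d2] d3]
    by (rule DERIV_cong) (simp add: A_def P_def algebra_simps power2_eq_square)
qed

lemma KK_0: "KK 0 = 0" by (simp add: KK_def a1_props(1))

lemma KK_neg: "s > 0 \<Longrightarrow> KK s < 0"
proof -
  assume s: "s > 0"
  define t where "t = airy_a1 + s"
  have tp: "t > airy_a1" using s by (simp add: t_def)
  have a1n: "airy_a1 < 0" by (rule a1_props(3))
  have Kd: "\<And>z. (KK has_real_derivative (Airy_Ai (airy_a1 + z))^2 * (2 * airy_a1 + 3 * z)) (at z)"
    by (rule KK_deriv)
  show ?thesis
  proof (cases "t \<ge> 0")
    case True
    have m: "t * (Airy_Ai t)^2 - (Aip t)^2 < 0" by (rule m_neg[OF tp])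
    have AP: "Airy_Ai t > 0" "Aip t < 0" using Ai_pos_right[OF True] by auto
    have "KK s = s * (t * (Airy_Ai t)^2 - (Aip t)^2) + Airy_Ai t * Aip t"
      by (simp add: KK_def t_def algebra_simps)
    moreover have "s * (t * (Airy_Ai t)^2 - (Aip t)^2) < 0" using s m by (simp add: mult_pos_neg)
    moreover have "Airy_Ai t * Aip t < 0" using AP by (simp add: mult_pos_neg)
    ultimately show ?thesis by linarith
  next
    case False
    then have sl: "s < - airy_a1" by (simp add: t_def)
    show ?thesis
    proof (cases "3 * s \<le> - 2 * airy_a1")
      case True
      obtain z where z: "0 < z" "z < s" "KK s - KK 0 = (s - 0) * ((Airy_Ai (airy_a1 + z))^2 * (2 * airy_a1 + 3 * z))"
        using MVT2[OF s, of KK "\<lambda>z. (Airy_Ai (airy_a1 + z))^2 * (2 * airy_a1 + 3 * z)"] Kd by blast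
      have "Airy_Ai (airy_a1 + z) > 0" using z by (intro Ai_pos_after_a1) simp
      moreover have "2 * airy_a1 + 3 * z < 0" using z True by linarith
      ultimately have "(Airy_Ai (airy_a1 + z))^2 * (2 * airy_a1 + 3 * z) < 0" by (simp add: mult_pos_neg)
      then have "(s - 0) * ((Airy_Ai (airy_a1 + z))^2 * (2 * airy_a1 + 3 * z)) < 0" using s by (simp add: mult_pos_neg)
      then show ?thesis using z KK_0 by linarith
    next
      case False
      obtain z where z: "s < z" "z < - airy_a1" "KK (- airy_a1) - KK s = (- airy_a1 - s) * ((Airy_Ai (airy_a1 + z))^2 * (2 * airy_a1 + 3 * z))"
        using MVT2[OF sl, of KK "\<lambda>z. (Airy_Ai (airy_a1 + z))^2 * (2 * airy_a1 + 3 * z)"] Kd by blast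
      have "Airy_Ai (airy_a1 + z) > 0" using z s by (intro Ai_pos_after_a1) simp
      moreover have "2 * airy_a1 + 3 * z > 0" using z False by linarith
      ultimately have "(Airy_Ai (airy_a1 + z))^2 * (2 * airy_a1 + 3 * z) > 0" by simp
      then have "(- airy_a1 - s) * ((Airy_Ai (airy_a1 + z))^2 * (2 * airy_a1 + 3 * z)) > 0" using sl by simp
      then have "KK s < KK (- airy_a1)" using z by linarith
      also have "KK (- airy_a1) = - (C1 * C2) + airy_a1 * C2^2"
        by (simp add: KK_def Ai_0 Aip_0 power2_eq_square)
      also have "\<dots> < 0"
      proof -
        have "C1 * C2 > 0" using C1_pos C2_pos by simp
        moreover have "airy_a1 * C2^2 < 0" using a1n C2_pos by (simp add: mult_neg_pos)
        ultimately show ?thesis by linarith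
      qed
      finally show ?thesis .
    qed
  qed
qed

lemma Phi_mono:
  assumes "0 < x" "x < y"
  shows "y * Aip (airy_a1 + y) / Airy_Ai (airy_a1 + y) < x * Aip (airy_a1 + x) / Airy_Ai (airy_a1 + x)"
proof (rule DERIV_neg_imp_decreasing[OF assms(2), where f = "\<lambda>s. s * Aip (airy_a1 + s) / Airy_Ai (airy_a1 + s)"])
  fix s assume s: "x \<le> s" "s \<le> y"
  then have s0: "s > 0" using assms by simp
  define t where "t = airy_a1 + s"
  have A: "Airy_Ai t > 0" using s0 by (simp add: t_def Ai_pos_after_a1)
  have D: "((\<lambda>s. s * Aip (airy_a1 + s) / Airy_Ai (airy_a1 + s)) has_real_derivative
      ((1 * Aip t + s * (t * Airy_Ai t)) * Airy_Ai t - s * Aip t * Aip t) / (Airy_Ai t * Airy_Ai t)) (at s)"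
  proof -
    have "Airy_Ai (airy_a1 + s) \<noteq> 0" using A by (simp add: t_def)
    from DERIV_divide[OF DERIV_mult[OF DERIV_ident chainAp[of s]] chainA[of s] this]
    show ?thesis by (rule DERIV_cong) (simp add: t_def)
  qed
  have "((1 * Aip t + s * (t * Airy_Ai t)) * Airy_Ai t - s * Aip t * Aip t) = KK s"
    by (simp add: KK_def t_def algebra_simps power2_eq_square)
  then have "((1 * Aip t + s * (t * Airy_Ai t)) * Airy_Ai t - s * Aip t * Aip t) / (Airy_Ai t * Airy_Ai t) < 0"
    using KK_neg[OF s0] A by (simp add: divide_neg_pos)
  then show "\<exists>d. ((\<lambda>s. s * Aip (airy_a1 + s) / Airy_Ai (airy_a1 + s)) has_real_derivative d) (at s) \<and> d < 0"
    using D by blast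
qed

lemma Phi_lim: "((\<lambda>x. x * Aip (airy_a1 + x) / Airy_Ai (airy_a1 + x)) \<longlongrightarrow> 1) (at_right 0)"
proof -
  have q: "((\<lambda>h. (Airy_Ai (airy_a1 + h) - Airy_Ai airy_a1) / h) \<longlongrightarrow> Aip airy_a1) (at 0)"
    using Ai_deriv[of airy_a1] unfolding DERIV_def .
  then have q': "((\<lambda>h. Airy_Ai (airy_a1 + h) / h) \<longlongrightarrow> Aip airy_a1) (at 0)"
    by (simp add: a1_props(1))
  have c: "isCont Aip airy_a1" by (rule DERIV_isCont[OF Aip_deriv])
  have p: "((\<lambda>h. Aip (airy_a1 + h)) \<longlongrightarrow> Aip airy_a1) (at 0)"
  proof -
    have "((\<lambda>h. airy_a1 + h) \<longlongrightarrow> airy_a1 + 0) (at (0::real))"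
      by (intro tendsto_intros)
    then show ?thesis using isCont_tendsto_compose[OF c, of "\<lambda>h. airy_a1 + h"] by simp
  qed
  have "((\<lambda>h. Aip (airy_a1 + h) / (Airy_Ai (airy_a1 + h) / h)) \<longlongrightarrow> Aip airy_a1 / Aip airy_a1) (at 0)"
    by (rule tendsto_divide[OF p q' Aip_a1])
  then have l: "((\<lambda>h. Aip (airy_a1 + h) / (Airy_Ai (airy_a1 + h) / h)) \<longlongrightarrow> 1) (at 0)"
    using Aip_a1 by simp
  have ev: "\<forall>\<^sub>F h in at (0::real). Aip (airy_a1 + h) / (Airy_Ai (airy_a1 + h) / h) = h * Aip (airy_a1 + h) / Airy_Ai (airy_a1 + h)"
    by (simp add: eventually_at_filter)
  have "((\<lambda>x. x * Aip (airy_a1 + x) / Airy_Ai (airy_a1 + x)) \<longlongrightarrow> 1) (at 0)"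
    by (rule Lim_transform_eventually[OF l ev])
  then show ?thesis by (rule tendsto_mono[OF at_within_le_at])
qed

theorem lemma4p1:
  fixes \<Phi> \<Psi> :: "real \<Rightarrow> real"
  defines "\<Phi> \<equiv> (\<lambda>x. x * deriv Airy_Ai (airy_a1 + x) / Airy_Ai (airy_a1 + x))"
      and "\<Psi> \<equiv> (\<lambda>x. deriv Airy_Ai (airy_a1 + x) / Airy_Ai (airy_a1 + x))"
  shows "(\<forall>n. \<forall>x>0. ((deriv ^^ n) \<Phi>) differentiable (at x))
       \<and> (\<forall>n. \<forall>x>0. ((deriv ^^ n) \<Psi>) differentiable (at x))
       \<and> (\<forall>x y. 0 < x \<longrightarrow> x < y \<longrightarrow> \<Phi> y < \<Phi> x)
       \<and> (\<forall>x y. 0 < x \<longrightarrow> x < y \<longrightarrow> \<Psi> y < \<Psi> x)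
       \<and> (\<Phi> \<longlongrightarrow> 1) (at_right 0)"
proof -
  have P: "\<Phi> = (\<lambda>x. x * deriv Airy_Ai (airy_a1 + x) / Airy_Ai (airy_a1 + x))"
    using \<Phi>_def by simp
  have S: "\<Psi> = (\<lambda>x. deriv Airy_Ai (airy_a1 + x) / Airy_Ai (airy_a1 + x))"
    using \<Psi>_def by simp
  have P': "\<Phi> = (\<lambda>x. x * Aip (airy_a1 + x) / Airy_Ai (airy_a1 + x))" unfolding P deriv_Ai ..
  have S': "\<Psi> = (\<lambda>x. Aip (airy_a1 + x) / Airy_Ai (airy_a1 + x))" unfolding S deriv_Ai ..
  show ?thesis
  proof (intro conjI)
    show "\<forall>n. \<forall>x>0. ((deriv ^^ n) \<Phi>) differentiable (at x)" by (rule Phi_smooth[OF P])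
    show "\<forall>n. \<forall>x>0. ((deriv ^^ n) \<Psi>) differentiable (at x)" by (rule Psi_smooth[OF S])
    show "\<forall>x y. 0 < x \<longrightarrow> x < y \<longrightarrow> \<Phi> y < \<Phi> x" unfolding P' using Phi_mono by blast
    show "\<forall>x y. 0 < x \<longrightarrow> x < y \<longrightarrow> \<Psi> y < \<Psi> x" unfolding S' using Psi_mono by blast
    show "(\<Phi> \<longlongrightarrow> 1) (at_right 0)" unfolding P' by (rule Phi_lim)
  qed
qed

end
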